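(* Let $n\geq 5$, let $S$ be the set of all $3$-cycles in $S_n$, and let $CAG_n=\mathrm{Cay}(A_n,S)$. Then $|\mathrm{Aut}(CAG_n)|\leq (n!)^2$.
   Context: For a finite group $\Gamma$ and a subset $T\subseteq\Gamma$ with $e\notin T$ and $T=T^{-1}$, the Cayley graph $\mathrm{Cay}(\Gamma,T)$ is the undirected graph with vertex set $\Gamma$ and edge set $\{\{\gamma,t\gamma\}\mid \gamma\in\Gamma, t\in T\}$. *)

theory Defs
  imports "HOL-Combinatorics.Combinatorics"
begin

definition alt_group :: "nat \<Rightarrow> (nat \<Rightarrow> nat) set" where
  "alt_group n = {p. p permutes {1..n} \<and> evenperm p}"

definition three_cycles :: "nat \<Rightarrow> (nat \<Rightarrow> nat) set" where
  "three_cycles n = {cycle_of_list [a, b, c] | a b c.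
      a \<in> {1..n} \<and> b \<in> {1..n} \<and> c \<in> {1..n} \<and> distinct [a, b, c]}"

definition cay_adj :: "('a \<Rightarrow> 'a) set \<Rightarrow> ('a \<Rightarrow> 'a) \<Rightarrow> ('a \<Rightarrow> 'a) \<Rightarrow> bool" where
  "cay_adj T x y \<longleftrightarrow> (\<exists>t\<in>T. y = t \<circ> x)"

text \<open>Automorphisms of a graph with vertex set V and adjacency relation adj:
  adjacency-preserving bijections of V (extended by the identity outside V so that
  they are uniquely represented as HOL functions).\<close>
definition graph_auts :: "'v set \<Rightarrow> ('v \<Rightarrow> 'v \<Rightarrow> bool) \<Rightarrow> ('v \<Rightarrow> 'v) set" where
  "graph_auts V adj = {f. bij_betw f V V \<and> (\<forall>x. x \<notin> V \<longrightarrow> f x = x) \<and>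
      (\<forall>x\<in>V. \<forall>y\<in>V. adj x y \<longleftrightarrow> adj (f x) (f y))}"

end

theory Submission
  imports Defs
begin

definition cyc3 :: "nat \<Rightarrow> nat \<Rightarrow> nat \<Rightarrow> nat \<Rightarrow> nat" where
  "cyc3 a b c = cycle_of_list [a, b, c]"

lemma cyc3_apply:
  assumes "distinct [a,b,c]"
  shows "cyc3 a b c x = (if x = a then b else if x = b then c else if x = c then a else x)"
  using assms by (auto simp: cyc3_def transpose_def)

lemma cyc3_permutes:
  assumes "distinct [a,b,c]" "a \<in> {1..n}" "b \<in> {1..n}" "c \<in> {1..n}"
  shows "cyc3 a b c permutes {1..n}"
proof -
  have "cyc3 a b c permutes set [a,b,c]" unfolding cyc3_def by (rule cycle_permutes)
  then show ?thesis by (rule permutes_subset) (use assms in auto)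
qed

lemma cyc3_even: "evenperm (cyc3 a b c)" if "distinct [a,b,c]"
proof -
  have "cyc3 a b c = transpose a b \<circ> transpose b c" by (simp add: cyc3_def)
  then show ?thesis using that by (simp add: evenperm_comp evenperm_swap permutation_swap_id)
qed

lemma cyc3_rot: "distinct [a,b,c] \<Longrightarrow> cyc3 a b c = cyc3 b c a"
  by (auto simp: fun_eq_iff cyc3_apply)

lemma cyc3_sq: "distinct [a,b,c] \<Longrightarrow> cyc3 a b c \<circ> cyc3 a b c = cyc3 a c b"
  by (auto simp: fun_eq_iff cyc3_apply)

lemma inv_cyc3: "distinct [a,b,c] \<Longrightarrow> inv (cyc3 a b c) = cyc3 a c b"
  by (rule inv_unique_comp) (auto simp: fun_eq_iff cyc3_apply)

lemma cyc3_supp: "distinct [a,b,c] \<Longrightarrow> {x. cyc3 a b c x \<noteq> x} = {a,b,c}"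
  by (auto simp: cyc3_apply)

lemma S_iff: "s \<in> three_cycles n \<longleftrightarrow>
   (\<exists>a b c. distinct [a,b,c] \<and> a \<in> {1..n} \<and> b \<in> {1..n} \<and> c \<in> {1..n} \<and> s = cyc3 a b c)"
  unfolding three_cycles_def cyc3_def by blast

lemma S_E:
  assumes "s \<in> three_cycles n"
  obtains a b c where "distinct [a,b,c]" "a \<in> {1..n}" "b \<in> {1..n}" "c \<in> {1..n}" "s = cyc3 a b c"
  using assms unfolding S_iff by blast

lemma cyc3_S: "distinct [a,b,c] \<Longrightarrow> a \<in> {1..n} \<Longrightarrow> b \<in> {1..n} \<Longrightarrow> c \<in> {1..n}
   \<Longrightarrow> cyc3 a b c \<in> three_cycles n"
  unfolding S_iff by blast

lemma S_sub_V: "s \<in> three_cycles n \<Longrightarrow> s \<in> alt_group n"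
proof (elim S_E)
  fix a b c assume *: "distinct [a,b,c]" "a \<in> {1..n}" "b \<in> {1..n}" "c \<in> {1..n}" "s = cyc3 a b c"
  then show "s \<in> alt_group n" unfolding alt_group_def using cyc3_permutes[OF *(1-4)] cyc3_even[OF *(1)] by blast
qed

lemma V_permutes: "x \<in> alt_group n \<Longrightarrow> x permutes {1..n}"
  by (simp add: alt_group_def)

lemma V_bij: "x \<in> alt_group n \<Longrightarrow> bij x"
  using permutes_bij unfolding alt_group_def by blast

lemma V_perm: "x \<in> alt_group n \<Longrightarrow> permutation x"
  by (auto simp: alt_group_def intro: permutes_imp_permutation)

lemma id_V: "id \<in> alt_group n"
  by (simp add: alt_group_def permutes_id)

lemma V_comp: "x \<in> alt_group n \<Longrightarrow> y \<in> alt_group n \<Longrightarrow> x \<circ> y \<in> alt_group n"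
  using V_perm[of x n] V_perm[of y n] evenperm_comp[of x y] permutes_compose[of y "{1..n}" x]
  unfolding alt_group_def by blast

lemma V_inv: "x \<in> alt_group n \<Longrightarrow> inv x \<in> alt_group n"
  using V_perm[of x n] evenperm_inv[of x] permutes_inv[of x "{1..n}"]
  unfolding alt_group_def by blast

lemma S_inv: "s \<in> three_cycles n \<Longrightarrow> inv s \<in> three_cycles n"
  by (elim S_E) (auto simp: inv_cyc3 intro!: cyc3_S)

lemma S_supp_card: "s \<in> three_cycles n \<Longrightarrow> card {x. s x \<noteq> x} = 3"
  by (elim S_E) (simp add: cyc3_supp)


lemma der3:
  assumes p: "p permutes {1..n}" and c3: "card {x. p x \<noteq> x} = 3"
  shows "p \<in> three_cycles n"
proof -
  let ?D = "{x. p x \<noteq> x}"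
  have fin: "finite ?D" using c3 card.infinite by fastforce
  have inj: "inj p" using p permutes_inj by blast
  have Dsub: "?D \<subseteq> {1..n}" using p unfolding permutes_def by blast
  have img: "p x \<in> ?D" if "x \<in> ?D" for x
    using that inj by (metis (mono_tags) injD mem_Collect_eq)
  obtain a where a: "a \<in> ?D" using c3 by (metis card.empty ex_in_conv zero_neq_numeral)
  define b where "b = p a"
  define c where "c = p b"
  have b: "b \<in> ?D" "b \<noteq> a" using img[OF a] a by (auto simp: b_def)
  have c: "c \<in> ?D" "c \<noteq> b" using img[OF b(1)] b by (auto simp: c_def)
  have ca: "c \<noteq> a"
  proof
    assume "c = a"
    then have pb: "p b = a" by (simp add: c_def)
    have "\<exists>d. d \<in> ?D \<and> d \<noteq> a \<and> d \<noteq> b"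
    proof (rule ccontr)
      assume "\<not> ?thesis"
      then have "?D \<subseteq> {a,b}" by auto
      then have "card ?D \<le> card {a,b}" by (intro card_mono) auto
      also have "\<dots> \<le> 2" by (simp add: card_insert_if)
      finally have "card ?D \<le> 2" .
      with c3 show False by simp
    qed
    then obtain d where d: "d \<in> ?D" "d \<noteq> a" "d \<noteq> b" by blast
    have "p d \<in> ?D" using img[OF d(1)] .
    have "p d \<noteq> a" using pb d inj by (metis injD)
    moreover have "p d \<noteq> b" using d inj b_def by (metis injD)
    moreover have "?D = {a,b,d}"
    proof -
      have "{a,b,d} \<subseteq> ?D" using a b d by auto
      moreover have "card {a,b,d} = 3" using d b by auto
      ultimately show ?thesis using c3 fin by (metis card_subset_eq)
    qed
    ultimately show False using \<open>p d \<in> ?D\<close> d by auto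
  qed
  have Deq: "?D = {a,b,c}"
  proof -
    have "{a,b,c} \<subseteq> ?D" using a b c by auto
    moreover have "card {a,b,c} = 3" using b c ca by auto
    ultimately show ?thesis using c3 fin by (metis card_subset_eq)
  qed
  have pc: "p c = a"
  proof -
    have "p c \<in> {a,b,c}" using img[OF c(1)] Deq by simp
    moreover have "p c \<noteq> b" using inj b_def ca by (metis injD)
    moreover have "p c \<noteq> c" using c by simp
    ultimately show ?thesis by auto
  qed
  have dist: "distinct [a,b,c]" using b c ca by auto
  have "p = cyc3 a b c"
  proof
    fix x show "p x = cyc3 a b c x"
      using Deq pc dist by (cases "x \<in> {a,b,c}") (auto simp: cyc3_apply b_def c_def)
  qed
  moreover have "a \<in> {1..n}" "b \<in> {1..n}" "c \<in> {1..n}" using Dsub a b c by auto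
  ultimately show ?thesis using dist by (auto intro: cyc3_S)
qed

lemma S_iff_card: "p permutes {1..n} \<Longrightarrow> p \<in> three_cycles n \<longleftrightarrow> card {x. p x \<noteq> x} = 3"
  using der3 S_supp_card by blast


definition ham :: "(nat \<Rightarrow> nat) \<Rightarrow> (nat \<Rightarrow> nat) \<Rightarrow> nat" where
  "ham x y = card {i. x i \<noteq> y i}"

lemma adj_iff_comp:
  assumes bx: "bij x"
  shows "cay_adj T x y \<longleftrightarrow> y \<circ> inv x \<in> T"
proof
  assume "cay_adj T x y"
  then obtain t where t: "t \<in> T" "y = t \<circ> x" by (auto simp: cay_adj_def)
  then have "y \<circ> inv x = t" using bx by (auto simp: fun_eq_iff surj_f_inv_f bij_is_surj)
  then show "y \<circ> inv x \<in> T" using t by simp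
next
  assume "y \<circ> inv x \<in> T"
  moreover have "y = (y \<circ> inv x) \<circ> x" using bx by (auto simp: fun_eq_iff inv_f_f bij_is_inj)
  ultimately show "cay_adj T x y" unfolding cay_adj_def by blast
qed

lemma supp_comp_inv:
  assumes bx: "bij x"
  shows "{i. (y \<circ> inv x) i \<noteq> i} = x ` {i. x i \<noteq> y i}"
proof
  show "{i. (y \<circ> inv x) i \<noteq> i} \<subseteq> x ` {i. x i \<noteq> y i}"
  proof
    fix i assume "i \<in> {i. (y \<circ> inv x) i \<noteq> i}"
    then have "y (inv x i) \<noteq> x (inv x i)" using bx by (simp add: bij_is_surj surj_f_inv_f)
    then show "i \<in> x ` {i. x i \<noteq> y i}" using bx
      by (metis (mono_tags, lifting) bij_is_surj image_eqI mem_Collect_eq surj_f_inv_f)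
  qed
  show "x ` {i. x i \<noteq> y i} \<subseteq> {i. (y \<circ> inv x) i \<noteq> i}"
    using bx by (auto simp: bij_is_inj inv_f_f)
qed

lemma adj_iff:
  assumes x: "x \<in> alt_group n" and y: "y \<in> alt_group n"
  shows "cay_adj (three_cycles n) x y \<longleftrightarrow> ham x y = 3"
proof -
  have bx: "bij x" using V_bij[OF x] .
  have pm: "y \<circ> inv x permutes {1..n}"
    using V_permutes[OF x] V_permutes[OF y] by (intro permutes_compose permutes_inv)
  have "cay_adj (three_cycles n) x y \<longleftrightarrow> y \<circ> inv x \<in> three_cycles n"
    by (rule adj_iff_comp[OF bx])
  also have "\<dots> \<longleftrightarrow> card {i. (y \<circ> inv x) i \<noteq> i} = 3"
    by (rule S_iff_card[OF pm])
  also have "card {i. (y \<circ> inv x) i \<noteq> i} = ham x y" unfolding ham_def supp_comp_inv[OF bx]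
    by (rule card_image) (use bx in \<open>auto simp: bij_def intro: inj_on_subset\<close>)
  finally show ?thesis .
qed


lemma ham_sym: "ham x y = ham y x"
  unfolding ham_def by (metis (mono_tags) eq_commute)

lemma adj_sym:
  "x \<in> alt_group n \<Longrightarrow> y \<in> alt_group n \<Longrightarrow> cay_adj (three_cycles n) x y \<longleftrightarrow> cay_adj (three_cycles n) y x"
  by (simp add: adj_iff ham_sym)

lemma adj_irrefl: "x \<in> alt_group n \<Longrightarrow> \<not> cay_adj (three_cycles n) x x"
  by (simp add: adj_iff ham_def)

lemma ham_ge4:
  assumes "distinct [i1,i2,i3,i4]" "x i1 \<noteq> y i1" "x i2 \<noteq> y i2" "x i3 \<noteq> y i3" "x i4 \<noteq> y i4"
  shows "ham x y \<noteq> 3"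
proof (cases "finite {i. x i \<noteq> y i}")
  case True
  have "{i1,i2,i3,i4} \<subseteq> {i. x i \<noteq> y i}" using assms by auto
  then have "card {i1,i2,i3,i4} \<le> ham x y" unfolding ham_def using True by (rule card_mono[rotated])
  moreover have "card {i1,i2,i3,i4} = 4" using assms(1) by simp
  ultimately show ?thesis by simp
next
  case False then show ?thesis by (simp add: ham_def)
qed

lemma S_inj: "s \<in> three_cycles n \<Longrightarrow> inj s"
  using V_bij S_sub_V bij_is_inj by blast

lemma S_nf:
  assumes s: "s \<in> three_cycles n" and p: "s p \<noteq> p"
  shows "distinct [p, s p, s (s p)] \<and> p \<in> {1..n} \<and> s p \<in> {1..n} \<and> s (s p) \<in> {1..n}
     \<and> s = cyc3 p (s p) (s (s p))"
  using s
proof (elim S_E)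
  fix a b c assume *: "distinct [a,b,c]" "a \<in> {1..n}" "b \<in> {1..n}" "c \<in> {1..n}" "s = cyc3 a b c"
  have "p \<in> {a,b,c}" using p *(1,5) by (auto simp: cyc3_apply split: if_splits)
  then show ?thesis using *
    by (auto simp: cyc3_apply intro: cyc3_rot)
qed

lemma S_moved4:
  assumes s: "s \<in> three_cycles n" and d: "distinct [a,b,c,d]"
    and m: "s a \<noteq> a" "s b \<noteq> b" "s c \<noteq> c" "s d \<noteq> d"
  shows False
proof -
  have "{a,b,c,d} \<subseteq> {x. s x \<noteq> x}" using m by auto
  moreover have "finite {x. s x \<noteq> x}" using S_supp_card[OF s] card.infinite by fastforce
  ultimately have "card {a,b,c,d} \<le> 3" using S_supp_card[OF s] by (metis card_mono)
  with d show False by simp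
qed

lemma S_img_moved: "s \<in> three_cycles n \<Longrightarrow> s p \<noteq> p \<Longrightarrow> s (s p) \<noteq> s p"
  using S_inj by (metis injD)

lemma S_no2: "s \<in> three_cycles n \<Longrightarrow> s p \<noteq> p \<Longrightarrow> s (s p) \<noteq> p"
  using S_nf[of s n p] by auto

lemma S_adj_iff: "s \<in> three_cycles n \<Longrightarrow> t \<in> three_cycles n \<Longrightarrow>
   cay_adj (three_cycles n) s t \<longleftrightarrow> ham s t = 3"
  by (intro adj_iff S_sub_V)

lemma S_out: "s \<in> three_cycles n \<Longrightarrow> p \<notin> {1..n} \<Longrightarrow> s p = p"
  using V_permutes[OF S_sub_V] by (metis permutes_not_in)

lemma L_AD:
  assumes s: "s \<in> three_cycles n" and t: "t \<in> three_cycles n"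
    and adj: "cay_adj (three_cycles n) s t" and ne: "t \<noteq> inv s"
  shows "\<exists>i. s i \<noteq> i \<and> t i = s i"
proof (rule ccontr)
  assume na: "\<not> ?thesis"
  obtain a b c where abc: "distinct [a,b,c]" "a \<in> {1..n}" "b \<in> {1..n}" "c \<in> {1..n}" "s = cyc3 a b c"
    using s by (rule S_E)
  let ?D = "{i. s i \<noteq> t i}"
  have h3: "card ?D = 3" using adj s t by (simp add: S_adj_iff ham_def)
  then have fin: "finite ?D" by (metis card.infinite zero_neq_numeral)
  have na': "t i \<noteq> s i" if "s i \<noteq> i" for i using na that by blast
  have sa: "s a = b" "s b = c" "s c = a" using abc by (auto simp: cyc3_apply)
  have nab: "t a \<noteq> b" "t b \<noteq> c" "t c \<noteq> a" using na'[of a] na'[of b] na'[of c] sa abc(1) by auto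
  have sub: "{a,b,c} \<subseteq> ?D" using nab sa by auto
  have Deq: "?D = {a,b,c}"
    using card_subset_eq[OF fin sub] h3 abc(1) by simp
  have tout: "t i = i" if "i \<notin> {a,b,c}" for i
  proof -
    have "s i = i" using that abc(1,5) by (simp add: cyc3_apply)
    moreover have "i \<notin> ?D" using that Deq by blast
    ultimately show ?thesis by simp
  qed
  have "{i. t i \<noteq> i} \<subseteq> {a,b,c}" using tout by blast
  moreover have "card {i. t i \<noteq> i} = card {a,b,c}" using S_supp_card[OF t] abc(1) by simp
  ultimately have supp: "{i. t i \<noteq> i} = {a,b,c}"
    by (metis card_subset_eq finite.emptyI finite_insert)
  have ta: "t a = c"
  proof -
    have "t a \<noteq> a" using supp by auto
    then have "t a \<in> {a,b,c}" using S_img_moved[OF t, of a] supp by blast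
    moreover have "t a \<noteq> b" using nab by simp
    ultimately show ?thesis using \<open>t a \<noteq> a\<close> by auto
  qed
  have tb: "t b = a"
  proof -
    have "t b \<noteq> b" using supp by auto
    then have "t b \<in> {a,b,c}" using S_img_moved[OF t, of b] supp by blast
    moreover have "t b \<noteq> c" using nab by simp
    ultimately show ?thesis using \<open>t b \<noteq> b\<close> by auto
  qed
  have tc: "t c = b"
  proof -
    have "t c \<noteq> c" using supp by auto
    then have "t c \<in> {a,b,c}" using S_img_moved[OF t, of c] supp by blast
    moreover have "t c \<noteq> a" using tb ta abc S_inj[OF t] by (metis injD distinct_length_2_or_more)
    ultimately show ?thesis using \<open>t c \<noteq> c\<close> by auto
  qed
  have "t = cyc3 a c b"
  proof
    fix i show "t i = cyc3 a c b i"
    proof (cases "i \<in> {a,b,c}")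
      case True then show ?thesis using ta tb tc abc(1) by (auto simp: cyc3_apply)
    next
      case False then show ?thesis using tout[OF False] abc(1) by (simp add: cyc3_apply)
    qed
  qed
  then show False using ne abc by (simp add: inv_cyc3)
qed

lemma adj_S_inv: assumes s: "s \<in> three_cycles n" shows "cay_adj (three_cycles n) s (inv s)"
proof -
  obtain a b c where *: "distinct [a,b,c]" "s = cyc3 a b c" using s by (rule S_E) blast
  have "inv s = s \<circ> s" using * by (simp add: inv_cyc3 cyc3_sq)
  then show ?thesis using s unfolding cay_adj_def by blast
qed

lemma L_INVNC:
  assumes s: "s \<in> three_cycles n" and u: "u \<in> three_cycles n"
    and a1: "cay_adj (three_cycles n) u s" and a2: "cay_adj (three_cycles n) u (inv s)"
  shows False
proof -
  have si: "inv s \<in> three_cycles n" using S_inv[OF s] .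
  have sV: "s \<in> alt_group n" "u \<in> alt_group n" "inv s \<in> alt_group n" using s u si by (auto intro: S_sub_V)
  have "u \<noteq> inv s" using a2 adj_irrefl[OF sV(2)] by blast
  moreover have "cay_adj (three_cycles n) s u" using a1 adj_sym sV by blast
  ultimately obtain i where i: "s i \<noteq> i" "u i = s i" using L_AD[OF s u] by blast
  have "u \<noteq> s" using a1 adj_irrefl[OF sV(2)] by blast
  then have "u \<noteq> inv (inv s)" using V_bij[OF sV(1)] by (simp add: bij_is_inj inv_inv_eq)
  moreover have "cay_adj (three_cycles n) (inv s) u" using a2 adj_sym sV by blast
  ultimately obtain j where j: "inv s j \<noteq> j" "u j = inv s j" using L_AD[OF si u] by blast
  obtain a b c where abc: "distinct [a,b,c]" "s = cyc3 a b c" using s by (rule S_E) blast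
  have is_: "inv s = cyc3 a c b" using abc by (simp add: inv_cyc3)
  have iabc: "i \<in> {a,b,c}" using i(1) abc by (auto simp: cyc3_apply split: if_splits)
  have jabc: "j \<in> {a,b,c}" using j(1) is_ abc by (auto simp: cyc3_apply split: if_splits)
  have F1: "False" if "x \<noteq> y" "u x = y" "u y = x" for x y
    using S_no2[OF u, of x] that by simp
  have F2: "False" if "x \<noteq> y" "u x = u y" for x y
    using S_inj[OF u] that by (metis injD)
  have vi: "u a = b \<or> u b = c \<or> u c = a" using iabc i(2) abc by (auto simp: cyc3_apply)
  have vj: "u a = c \<or> u c = b \<or> u b = a" using jabc j(2) is_ abc(1) by (auto simp: cyc3_apply)
  show False using vi vj abc(1) F1 F2 by (metis distinct_length_2_or_more distinct_singleton)
qed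

lemma exists_avoid:
  assumes "finite F" "card F < n"
  shows "\<exists>z\<in>{1..n}. z \<notin> F"
proof (rule ccontr)
  assume "\<not> ?thesis"
  then have "{1..n} \<subseteq> F" by blast
  then have "card {1..n} \<le> card F" using assms(1) by (rule card_mono[rotated])
  with assms(2) show False by simp
qed

lemma avoid4: "5 \<le> (n::nat) \<Longrightarrow> \<exists>z\<in>{1..n}. z \<notin> {p,q,x,y}"
  by (rule exists_avoid) (use card_length[of "[p,q,x,y]"] in auto)

lemma cyc3_comp_lemma: "distinct [p,q,x,y] \<Longrightarrow> cyc3 p q y = cyc3 p x y \<circ> cyc3 p q x"
  by (auto simp: fun_eq_iff cyc3_apply)

lemma L_CL:
  assumes s: "s \<in> three_cycles n" and t: "t \<in> three_cycles n"
    and sp: "s p = q" and tp: "t p = q" and pq: "p \<noteq> q" and ne: "s \<noteq> t"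
  shows "cay_adj (three_cycles n) s t"
proof -
  obtain x y where S1: "distinct [p, q, x]" "p \<in> {1..n}" "q \<in> {1..n}" "x \<in> {1..n}" "s = cyc3 p q x"
    and T1: "distinct [p, q, y]" "y \<in> {1..n}" "t = cyc3 p q y"
    using S_nf[OF s, of p] S_nf[OF t, of p] sp tp pq by auto
  have xy: "x \<noteq> y" using S1 T1 ne by metis
  have c: "cyc3 p x y \<in> three_cycles n" using S1 T1 xy by (intro cyc3_S) auto
  have "t = cyc3 p x y \<circ> s" using S1 T1 xy cyc3_comp_lemma[of p q x y] by simp
  then show ?thesis using c unfolding cay_adj_def by blast
qed


lemma cyc3_neq: "distinct [p,q,x] \<Longrightarrow> distinct [p,q,z] \<Longrightarrow> x \<noteq> z \<Longrightarrow> cyc3 p q z \<noteq> cyc3 p q x"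
proof
  assume "distinct [p,q,x]" "distinct [p,q,z]" "x \<noteq> z" "cyc3 p q z = cyc3 p q x"
  then have "cyc3 p q z q = cyc3 p q x q" by simp
  with \<open>distinct [p,q,x]\<close> \<open>distinct [p,q,z]\<close> \<open>x \<noteq> z\<close> show False by (simp add: cyc3_apply)
qed

lemma L_TRI:
  assumes u: "u \<in> three_cycles n" and d: "distinct [p,q,x,y]"
    and r: "p \<in> {1..n}" "q \<in> {1..n}" "x \<in> {1..n}" "y \<in> {1..n}"
    and a1: "cay_adj (three_cycles n) u (cyc3 p q x)" and a2: "cay_adj (three_cycles n) u (cyc3 p q y)"
  shows "u p = q"
proof (rule ccontr)
  assume up: "u p \<noteq> q"
  have s: "cyc3 p q x \<in> three_cycles n" and t: "cyc3 p q y \<in> three_cycles n"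
    using d r by (auto intro!: cyc3_S)
  have uV: "u \<in> alt_group n" using u by (rule S_sub_V)
  have sV: "cyc3 p q x \<in> alt_group n" and tV: "cyc3 p q y \<in> alt_group n" using s t by (auto intro: S_sub_V)
  have nis: "u \<noteq> inv (cyc3 p q x)"
  proof
    assume "u = inv (cyc3 p q x)"
    then have "u = cyc3 p x q" using d by (simp add: inv_cyc3)
    then have "ham (cyc3 p x q) (cyc3 p q y) = 3" using a2 u t by (simp add: S_adj_iff)
    moreover have "ham (cyc3 p x q) (cyc3 p q y) \<noteq> 3"
      by (rule ham_ge4[of p q x y]) (use d in \<open>auto simp: cyc3_apply\<close>)
    ultimately show False by simp
  qed
  have nit: "u \<noteq> inv (cyc3 p q y)"
  proof
    assume "u = inv (cyc3 p q y)"
    then have "u = cyc3 p y q" using d by (simp add: inv_cyc3)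
    then have "ham (cyc3 p y q) (cyc3 p q x) = 3" using a1 u s by (simp add: S_adj_iff)
    moreover have "ham (cyc3 p y q) (cyc3 p q x) \<noteq> 3"
      by (rule ham_ge4[of p q x y]) (use d in \<open>auto simp: cyc3_apply\<close>)
    ultimately show False by simp
  qed
  obtain i where i: "cyc3 p q x i \<noteq> i" "u i = cyc3 p q x i"
    using L_AD[OF s u _ nis] a1 adj_sym[OF uV sV] by blast
  obtain j where j: "cyc3 p q y j \<noteq> j" "u j = cyc3 p q y j"
    using L_AD[OF t u _ nit] a2 adj_sym[OF uV tV] by blast
  have vi: "u q = x \<or> u x = p" using i up d by (auto simp: cyc3_apply split: if_splits)
  have vj: "u q = y \<or> u y = p" using j up d by (auto simp: cyc3_apply split: if_splits)
  have injU: "u a = u b \<Longrightarrow> a = b" for a b using S_inj[OF u] by (metis injD)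
  have mv: "u (u a) \<noteq> u a" if "u a \<noteq> a" for a using S_img_moved[OF u that] .
  show False
  proof -
    { assume A: "u q = x" "u y = p"
      have "u x \<noteq> x" using mv[of q] A d by auto
      moreover have "u p \<noteq> p" using mv[of y] A d by auto
      ultimately have False using S_moved4[OF u, of q y x p] A d by auto }
    moreover
    { assume A: "u x = p" "u q = y"
      have "u p \<noteq> p" using mv[of x] A d by auto
      moreover have "u y \<noteq> y" using mv[of q] A d by auto
      ultimately have False using S_moved4[OF u, of x q p y] A d by auto }
    moreover
    { assume A: "u x = p" "u y = p" then have False using injU[of x y] d by auto }
    moreover
    { assume A: "u q = x" "u q = y" then have False using d by auto }
    ultimately show False using vi vj by blast
  qed
qed

lemma INV_char:
  assumes n5: "5 \<le> n" and s: "s \<in> three_cycles n" and t: "t \<in> three_cycles n"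
  shows "t = inv s \<longleftrightarrow> cay_adj (three_cycles n) s t \<and>
            \<not> (\<exists>u\<in>three_cycles n. cay_adj (three_cycles n) u s \<and> cay_adj (three_cycles n) u t)"
proof
  assume "t = inv s"
  then show "cay_adj (three_cycles n) s t \<and>
            \<not> (\<exists>u\<in>three_cycles n. cay_adj (three_cycles n) u s \<and> cay_adj (three_cycles n) u t)"
    using adj_S_inv[OF s] L_INVNC[OF s] by blast
next
  assume A: "cay_adj (three_cycles n) s t \<and>
            \<not> (\<exists>u\<in>three_cycles n. cay_adj (three_cycles n) u s \<and> cay_adj (three_cycles n) u t)"
  show "t = inv s"
  proof (rule ccontr)
    assume ne: "t \<noteq> inv s"
    obtain p where p: "s p \<noteq> p" "t p = s p" using L_AD[OF s t _ ne] A by blast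
    define q where "q = s p"
    have ts: "t \<noteq> s" using A adj_irrefl[OF S_sub_V[OF s]] by blast
    obtain x y where S1: "distinct [p, q, x]" "p \<in> {1..n}" "q \<in> {1..n}" "x \<in> {1..n}" "s = cyc3 p q x"
      and T1: "distinct [p, q, y]" "y \<in> {1..n}" "t = cyc3 p q y"
      using S_nf[OF s, of p] S_nf[OF t, of p] p unfolding q_def by auto
    obtain z where z: "z \<in> {1..n}" "z \<notin> {p,q,x,y}" using avoid4[OF n5] by blast
    have u: "cyc3 p q z \<in> three_cycles n" using z S1 by (intro cyc3_S) auto
    have "cay_adj (three_cycles n) (cyc3 p q z) s"
      by (rule L_CL[OF u s, of p q]) (use z S1 cyc3_neq[of p q x z] in \<open>auto simp: cyc3_apply\<close>)
    moreover have "cay_adj (three_cycles n) (cyc3 p q z) t"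
      by (rule L_CL[OF u t, of p q]) (use z S1 T1 cyc3_neq[of p q y z] in \<open>auto simp: cyc3_apply\<close>)
    ultimately show False using A u by blast
  qed
qed


definition Arcs :: "nat \<Rightarrow> (nat \<times> nat) set" where
  "Arcs n = {(p,q). p \<in> {1..n} \<and> q \<in> {1..n} \<and> p \<noteq> q}"

definition Pr :: "nat \<times> nat \<Rightarrow> nat \<times> nat \<Rightarrow> bool" where
  "Pr \<alpha> \<beta> \<longleftrightarrow> (snd \<alpha> = fst \<beta> \<and> snd \<beta> \<noteq> fst \<alpha>) \<or> (snd \<beta> = fst \<alpha> \<and> fst \<beta> \<noteq> snd \<alpha>)"

definition Mrel :: "nat \<times> nat \<Rightarrow> nat \<times> nat \<Rightarrow> bool" where
  "Mrel \<alpha> \<beta> \<longleftrightarrow> \<alpha> \<noteq> \<beta> \<and> (fst \<alpha> = fst \<beta> \<or> snd \<alpha> = snd \<beta>)"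

lemma Arcs_iff: "(a,b) \<in> Arcs n \<longleftrightarrow> a \<in> {1..n} \<and> b \<in> {1..n} \<and> a \<noteq> b"
  by (simp add: Arcs_def)

lemma Mrel_Pr: "\<alpha> \<in> Arcs n \<Longrightarrow> \<beta> \<in> Arcs n \<Longrightarrow> Mrel \<alpha> \<beta> \<longleftrightarrow> Pr (prod.swap \<alpha>) \<beta>"
  by (cases \<alpha>; cases \<beta>) (auto simp: Mrel_def Pr_def Arcs_def)

lemma swap_Arcs: "\<alpha> \<in> Arcs n \<Longrightarrow> prod.swap \<alpha> \<in> Arcs n"
  by (cases \<alpha>) (auto simp: Arcs_def)

lemma Pr_swap: "Pr (prod.swap \<alpha>) (prod.swap \<beta>) \<longleftrightarrow> Pr \<alpha> \<beta>"
  by (cases \<alpha>; cases \<beta>) (auto simp: Pr_def)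

lemma exists_avoid':
  assumes "finite F" "card F < n"
  shows "\<exists>z\<in>{1..n}. z \<notin> F"
proof (rule ccontr)
  assume "\<not> ?thesis"
  then have "{1..n} \<subseteq> F" by blast
  then have "card {1..n} \<le> card F" using assms(1) by (rule card_mono[rotated])
  with assms(2) show False by simp
qed

lemma avoid_list: "length xs < (n::nat) \<Longrightarrow> \<exists>z\<in>{1..n}. z \<notin> set xs"
  by (rule exists_avoid') (use card_length[of xs] in auto)

locale arcmap =
  fixes n :: nat and \<pi> :: "nat \<times> nat \<Rightarrow> nat \<times> nat"
  assumes n5: "5 \<le> n"
    and maps: "\<And>\<alpha>. \<alpha> \<in> Arcs n \<Longrightarrow> \<pi> \<alpha> \<in> Arcs n"
    and inj: "inj_on \<pi> (Arcs n)"
    and pr: "\<And>\<alpha> \<beta>. \<alpha> \<in> Arcs n \<Longrightarrow> \<beta> \<in> Arcs n \<Longrightarrow> Pr \<alpha> \<beta> \<longleftrightarrow> Pr (\<pi> \<alpha>) (\<pi> \<beta>)"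
    and rv: "\<And>\<alpha>. \<alpha> \<in> Arcs n \<Longrightarrow> \<pi> (prod.swap \<alpha>) = prod.swap (\<pi> \<alpha>)"
begin

lemma mrel: "\<alpha> \<in> Arcs n \<Longrightarrow> \<beta> \<in> Arcs n \<Longrightarrow> Mrel \<alpha> \<beta> \<longleftrightarrow> Mrel (\<pi> \<alpha>) (\<pi> \<beta>)"
  using Mrel_Pr maps pr rv swap_Arcs by metis

lemma injD': "\<alpha> \<in> Arcs n \<Longrightarrow> \<beta> \<in> Arcs n \<Longrightarrow> \<pi> \<alpha> = \<pi> \<beta> \<Longrightarrow> \<alpha> = \<beta>"
  using inj by (simp add: inj_on_def)

definition f :: "nat \<Rightarrow> nat \<Rightarrow> nat \<Rightarrow> bool" where
  "f a b c \<longleftrightarrow> fst (\<pi> (a,b)) = fst (\<pi> (a,c))"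

lemma R1:
  assumes d: "distinct [a,b,c,d]" and r: "a \<in> {1..n}" "b \<in> {1..n}" "c \<in> {1..n}" "d \<in> {1..n}"
  shows "f a b c \<longleftrightarrow> f a b d"
proof -
  have A: "(a,b) \<in> Arcs n" "(a,c) \<in> Arcs n" "(a,d) \<in> Arcs n" using d r by (auto simp: Arcs_def)
  have m1: "Mrel (\<pi> (a,b)) (\<pi> (a,c))" using mrel[OF A(1,2)] d by (simp add: Mrel_def)
  have m2: "Mrel (\<pi> (a,b)) (\<pi> (a,d))" using mrel[OF A(1,3)] d by (simp add: Mrel_def)
  have m3: "Mrel (\<pi> (a,c)) (\<pi> (a,d))" using mrel[OF A(2,3)] d by (simp add: Mrel_def)
  show ?thesis using m1 m2 m3 unfolding f_def Mrel_def by (metis prod.expand)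
qed

lemma R3:
  assumes d: "distinct [a,b,c,d]" and r: "a \<in> {1..n}" "b \<in> {1..n}" "c \<in> {1..n}" "d \<in> {1..n}"
  shows "f a c d \<longleftrightarrow> f b c d"
proof -
  have A: "(a,c) \<in> Arcs n" "(a,d) \<in> Arcs n" "(b,c) \<in> Arcs n" "(b,d) \<in> Arcs n"
    using d r by (auto simp: Arcs_def)
  have XY: "Mrel (\<pi> (a,c)) (\<pi> (a,d))" using mrel[OF A(1,2)] d by (simp add: Mrel_def)
  have XZ: "Mrel (\<pi> (a,c)) (\<pi> (b,c))" using mrel[OF A(1,3)] d by (simp add: Mrel_def)
  have ZW: "Mrel (\<pi> (b,c)) (\<pi> (b,d))" using mrel[OF A(3,4)] d by (simp add: Mrel_def)
  have YZ: "\<not> Mrel (\<pi> (a,d)) (\<pi> (b,c))" using mrel[OF A(2,3)] d by (simp add: Mrel_def)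
  have XW: "\<not> Mrel (\<pi> (a,c)) (\<pi> (b,d))" using mrel[OF A(1,4)] d by (simp add: Mrel_def)
  have dYZ: "\<pi> (a,d) \<noteq> \<pi> (b,c)" and dXW: "\<pi> (a,c) \<noteq> \<pi> (b,d)"
    using injD'[OF A(2,3)] injD'[OF A(1,4)] d by auto
  show ?thesis using XY XZ ZW YZ XW dYZ dXW unfolding f_def Mrel_def by metis
qed

lemma f_const_a:
  assumes d1: "distinct [a,b,c]" and d2: "distinct [a,b',c']"
    and r: "a \<in> {1..n}" "b \<in> {1..n}" "c \<in> {1..n}" "b' \<in> {1..n}" "c' \<in> {1..n}"
  shows "f a b c \<longleftrightarrow> f a b' c'"
proof -
  have step: "f a x y \<longleftrightarrow> f a x z" if "distinct [a,x,y]" "distinct [a,x,z]"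
     "x \<in> {1..n}" "y \<in> {1..n}" "z \<in> {1..n}" for x y z
    using that R1[of a x y z] r by (cases "y = z") auto
  have sym: "f a x y \<longleftrightarrow> f a y x" for x y by (auto simp: f_def)
  show ?thesis
  proof (cases "b = b'")
    case True then show ?thesis using step[of b c c'] d1 d2 r by auto
  next
    case False
    have "f a b c \<longleftrightarrow> f a b b'" using step[of b c b'] d1 d2 r False by auto
    also have "\<dots> \<longleftrightarrow> f a b' b" by (rule sym)
    also have "\<dots> \<longleftrightarrow> f a b' c'" using step[of b' b c'] d1 d2 r False by auto
    finally show ?thesis .
  qed
qed

lemma f_const:
  assumes d1: "distinct [a,b,c]" and d2: "distinct [a',b',c']"
    and r: "a \<in> {1..n}" "b \<in> {1..n}" "c \<in> {1..n}" "a' \<in> {1..n}" "b' \<in> {1..n}" "c' \<in> {1..n}"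
  shows "f a b c \<longleftrightarrow> f a' b' c'"
proof (cases "a = a'")
  case True then show ?thesis using f_const_a d1 d2 r by blast
next
  case False
  obtain x where x: "x \<in> {1..n}" "x \<notin> set [a,a']" using avoid_list[of "[a,a']" n] n5 by auto
  obtain y where y: "y \<in> {1..n}" "y \<notin> set [a,a',x]" using avoid_list[of "[a,a',x]" n] n5 by auto
  have "f a b c \<longleftrightarrow> f a x y" using f_const_a[of a b c x y] d1 x y r by auto
  also have "\<dots> \<longleftrightarrow> f a' x y" using R3[of a a' x y] x y r False by auto
  also have "\<dots> \<longleftrightarrow> f a' b' c'" using f_const_a[of a' x y b' c'] d2 x y r by auto
  finally show ?thesis .
qed

lemma case1:
  assumes T: "\<And>a b c. distinct [a,b,c] \<Longrightarrow> a \<in> {1..n} \<Longrightarrow> b \<in> {1..n} \<Longrightarrow> c \<in> {1..n} \<Longrightarrow> f a b c"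
  shows "\<exists>\<sigma>. \<sigma> permutes {1..n} \<and> (\<forall>a b. (a,b) \<in> Arcs n \<longrightarrow> \<pi> (a,b) = (\<sigma> a, \<sigma> b))"
proof -
  have oth: "\<exists>b. b \<in> {1..n} \<and> b \<noteq> a" for a using avoid_list[of "[a]" n] n5 by auto
  define c0 where "c0 a = (SOME b. b \<in> {1..n} \<and> b \<noteq> a)" for a
  have c0: "c0 a \<in> {1..n} \<and> c0 a \<noteq> a" for a unfolding c0_def by (rule someI_ex[OF oth])
  define \<sigma> where "\<sigma> a = fst (\<pi> (a, c0 a))" for a
  define \<tau> where "\<tau> b = snd (\<pi> (c0 b, b))" for b
  have fst_eq: "fst (\<pi> (a,b)) = \<sigma> a" if ab: "(a,b) \<in> Arcs n" for a b
  proof (cases "b = c0 a")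
    case True then show ?thesis by (simp add: \<sigma>_def)
  next
    case False
    have "f a b (c0 a)" by (rule T) (use ab False c0[of a] in \<open>auto simp: Arcs_def\<close>)
    then show ?thesis by (simp add: f_def \<sigma>_def)
  qed
  have snd_eq0: "snd (\<pi> (a,b)) = snd (\<pi> (c,b))" if "(a,b) \<in> Arcs n" "(c,b) \<in> Arcs n" "a \<noteq> c" for a b c
  proof (rule ccontr)
    assume ne: "snd (\<pi> (a,b)) \<noteq> snd (\<pi> (c,b))"
    have "Mrel (a,b) (c,b)" using that(3) by (simp add: Mrel_def)
    then have "Mrel (\<pi> (a,b)) (\<pi> (c,b))" using mrel[OF that(1,2)] by simp
    then have ff: "fst (\<pi> (a,b)) = fst (\<pi> (c,b))" using ne by (simp add: Mrel_def)
    obtain d where d: "d \<in> {1..n}" "d \<notin> set [a,b,c]" using avoid_list[of "[a,b,c]" n] n5 by auto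
    have ad: "(a,d) \<in> Arcs n" using d that(1) by (auto simp: Arcs_def)
    have "fst (\<pi> (a,d)) = fst (\<pi> (c,b))" using fst_eq[OF ad] fst_eq[OF that(1)] ff by simp
    moreover have "\<pi> (a,d) \<noteq> \<pi> (c,b)"
    proof
      assume "\<pi> (a,d) = \<pi> (c,b)"
      then have "(a,d) = (c,b)" by (rule injD'[OF ad that(2)])
      with that(3) show False by simp
    qed
    ultimately have "Mrel (\<pi> (a,d)) (\<pi> (c,b))" by (simp add: Mrel_def)
    then have "Mrel (a,d) (c,b)" using mrel[OF ad that(2)] by simp
    then show False using d that(3) by (simp add: Mrel_def)
  qed
  have snd_eq: "snd (\<pi> (a,b)) = \<tau> b" if ab: "(a,b) \<in> Arcs n" for a b
  proof (cases "a = c0 b")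
    case True then show ?thesis by (simp add: \<tau>_def)
  next
    case False
    have "(c0 b, b) \<in> Arcs n" using ab c0[of b] by (auto simp: Arcs_def)
    then show ?thesis using snd_eq0[OF ab _ False] by (simp add: \<tau>_def)
  qed
  have st: "\<tau> b = \<sigma> b" if ab: "(a,b) \<in> Arcs n" for a b
  proof -
    have ba: "(b,a) \<in> Arcs n" using ab by (auto simp: Arcs_def)
    have "\<pi> (b,a) = prod.swap (\<pi> (a,b))" using rv[OF ab] by simp
    then have "fst (\<pi> (b,a)) = snd (\<pi> (a,b))" by simp
    then show ?thesis using fst_eq[OF ba] snd_eq[OF ab] by simp
  qed
  have piab: "\<pi> (a,b) = (\<sigma> a, \<sigma> b)" if ab: "(a,b) \<in> Arcs n" for a b
    by (rule prod_eqI) (simp_all add: fst_eq[OF ab] snd_eq[OF ab] st[OF ab])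
  have into: "\<sigma> a \<in> {1..n}" if "a \<in> {1..n}" for a
  proof -
    have "(a, c0 a) \<in> Arcs n" using that c0[of a] by (auto simp: Arcs_def)
    then have "\<pi> (a, c0 a) \<in> Arcs n" by (rule maps)
    then show ?thesis unfolding \<sigma>_def by (cases "\<pi> (a, c0 a)") (simp add: Arcs_def)
  qed
  have injs: "inj_on \<sigma> {1..n}"
  proof (rule inj_onI)
    fix a a' assume a: "a \<in> {1..n}" "a' \<in> {1..n}" "\<sigma> a = \<sigma> a'"
    show "a = a'"
    proof (rule ccontr)
      assume "a \<noteq> a'"
      obtain b where b: "b \<in> {1..n}" "b \<notin> set [a,a']" using avoid_list[of "[a,a']" n] n5 by auto
      have A1: "(a,b) \<in> Arcs n" and A2: "(a',b) \<in> Arcs n" using a b by (auto simp: Arcs_def)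
      have "\<pi> (a,b) = \<pi> (a',b)" using piab[OF A1] piab[OF A2] a(3) by simp
      then have "(a,b) = (a',b)" by (rule injD'[OF A1 A2])
      with \<open>a \<noteq> a'\<close> show False by simp
    qed
  qed
  define \<sigma>' where "\<sigma>' x = (if x \<in> {1..n} then \<sigma> x else x)" for x
  have s'in: "\<sigma>' x = \<sigma> x" if "x \<in> {1..n}" for x using that unfolding \<sigma>'_def by (rule if_P)
  have s'out: "\<sigma>' x = x" if "x \<notin> {1..n}" for x using that unfolding \<sigma>'_def by (rule if_not_P)
  have inj': "inj_on \<sigma>' {1..n}"
  proof (rule inj_onI)
    fix x y assume xy: "x \<in> {1..n}" "y \<in> {1..n}" "\<sigma>' x = \<sigma>' y"
    then have "\<sigma> x = \<sigma> y" using s'in[OF xy(1)] s'in[OF xy(2)] by simp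
    then show "x = y" using xy(1,2) by (rule inj_onD[OF injs])
  qed
  have sub: "\<sigma>' ` {1..n} \<subseteq> {1..n}"
  proof
    fix y assume "y \<in> \<sigma>' ` {1..n}"
    then obtain x where x: "x \<in> {1..n}" "y = \<sigma>' x" by blast
    then show "y \<in> {1..n}" using into[OF x(1)] s'in[OF x(1)] by simp
  qed
  have "\<sigma>' ` {1..n} = {1..n}" by (rule endo_inj_surj[OF finite_atLeastAtMost sub inj'])
  then have "bij_betw \<sigma>' {1..n} {1..n}" using inj' unfolding bij_betw_def by blast
  then have "\<sigma>' permutes {1..n}" by (rule bij_imp_permutes) (rule s'out)
  moreover have "\<forall>a b. (a,b) \<in> Arcs n \<longrightarrow> \<pi> (a,b) = (\<sigma>' a, \<sigma>' b)"
  proof (intro allI impI)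
    fix a b assume ab: "(a,b) \<in> Arcs n"
    then have "a \<in> {1..n}" "b \<in> {1..n}" by (auto simp: Arcs_def)
    then show "\<pi> (a,b) = (\<sigma>' a, \<sigma>' b)" using piab[OF ab] s'in by simp
  qed
  ultimately show ?thesis by blast
qed
end

lemma arcmap_swap: "arcmap n \<pi> \<Longrightarrow> arcmap n (prod.swap \<circ> \<pi>)"
  unfolding arcmap_def
  by (auto simp: Pr_swap swap_Arcs simp del: prod.swap_def intro: inj_on_imageI2 comp_inj_on)

theorem arcs_perm:
  assumes am: "arcmap n \<pi>"
  shows "\<exists>\<sigma>. \<sigma> permutes {1..n} \<and> ((\<forall>a b. (a,b) \<in> Arcs n \<longrightarrow> \<pi> (a,b) = (\<sigma> a, \<sigma> b)) \<or>
                                   (\<forall>a b. (a,b) \<in> Arcs n \<longrightarrow> \<pi> (a,b) = (\<sigma> b, \<sigma> a)))"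
proof -
  interpret A: arcmap n \<pi> by (rule am)
  have am': "arcmap n (prod.swap \<circ> \<pi>)" by (rule arcmap_swap[OF am])
  interpret B: arcmap n "prod.swap \<circ> \<pi>" by (rule am')
  have r123: "(1::nat) \<in> {1..n}" "(2::nat) \<in> {1..n}" "(3::nat) \<in> {1..n}" using A.n5 by auto
  show ?thesis
  proof (cases "A.f 1 2 3")
    case True
    have "A.f a b c" if "distinct [a,b,c]" "a \<in> {1..n}" "b \<in> {1..n}" "c \<in> {1..n}" for a b c
      using A.f_const[of 1 2 3 a b c] True that r123 by auto
    then show ?thesis using A.case1 by blast
  next
    case False
    have "B.f a b c" if d: "distinct [a,b,c]" "a \<in> {1..n}" "b \<in> {1..n}" "c \<in> {1..n}" for a b c
    proof -
      have nf: "\<not> A.f a b c" using A.f_const[of 1 2 3 a b c] False d r123 by auto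
      have ar: "(a,b) \<in> Arcs n" "(a,c) \<in> Arcs n" using d by (auto simp: Arcs_def)
      have "Mrel (\<pi> (a,b)) (\<pi> (a,c))" using A.mrel[OF ar] d by (simp add: Mrel_def)
      then show ?thesis using nf unfolding A.f_def B.f_def Mrel_def by (simp add: fst_swap)
    qed
    then obtain \<sigma> where \<sigma>: "\<sigma> permutes {1..n}" "\<forall>a b. (a,b) \<in> Arcs n \<longrightarrow> prod.swap (\<pi> (a,b)) = (\<sigma> a, \<sigma> b)"
      using B.case1 by auto
    have "\<pi> (a,b) = (\<sigma> b, \<sigma> a)" if "(a,b) \<in> Arcs n" for a b
    proof -
      have "prod.swap (\<pi> (a,b)) = (\<sigma> a, \<sigma> b)" using \<sigma>(2) that by blast
      then show ?thesis by (cases "\<pi> (a,b)") simp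
    qed
    then show ?thesis using \<sigma>(1) by blast
  qed
qed


definition K :: "nat \<Rightarrow> nat \<times> nat \<Rightarrow> (nat \<Rightarrow> nat) set" where
  "K n \<alpha> = {s \<in> three_cycles n. s (fst \<alpha>) = snd \<alpha>}"

lemma K_sub: "K n \<alpha> \<subseteq> three_cycles n" by (auto simp: K_def)

lemma cyc3_in_K:
  assumes "distinct [p,q,x]" "p \<in> {1..n}" "q \<in> {1..n}" "x \<in> {1..n}"
  shows "cyc3 p q x \<in> K n (p,q)"
  using assms by (auto simp: K_def cyc3_apply intro!: cyc3_S)

lemma K_KK:
  assumes pq: "(p,q) \<in> Arcs n" and s: "s \<in> K n (p,q)" and t: "t \<in> K n (p,q)" and st: "s \<noteq> t"
  shows "K n (p,q) = {s,t} \<union> {u \<in> three_cycles n. cay_adj (three_cycles n) u s \<and> cay_adj (three_cycles n) u t}"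
proof
  have sS: "s \<in> three_cycles n" "s p = q" and tS: "t \<in> three_cycles n" "t p = q"
    using s t by (auto simp: K_def)
  have pq': "p \<noteq> q" using pq by (simp add: Arcs_def)
  show "K n (p,q) \<subseteq> {s,t} \<union> {u \<in> three_cycles n. cay_adj (three_cycles n) u s \<and> cay_adj (three_cycles n) u t}"
  proof
    fix u assume u: "u \<in> K n (p,q)"
    then have uS: "u \<in> three_cycles n" "u p = q" by (auto simp: K_def)
    show "u \<in> {s,t} \<union> {u \<in> three_cycles n. cay_adj (three_cycles n) u s \<and> cay_adj (three_cycles n) u t}"
    proof (cases "u = s \<or> u = t")
      case True then show ?thesis by blast
    next
      case False
      have "cay_adj (three_cycles n) u s" using L_CL[OF uS(1) sS(1) uS(2) sS(2) pq'] False by blast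
      moreover have "cay_adj (three_cycles n) u t" using L_CL[OF uS(1) tS(1) uS(2) tS(2) pq'] False by blast
      ultimately show ?thesis using uS by blast
    qed
  qed
  show "{s,t} \<union> {u \<in> three_cycles n. cay_adj (three_cycles n) u s \<and> cay_adj (three_cycles n) u t} \<subseteq> K n (p,q)"
  proof
    fix u assume u: "u \<in> {s,t} \<union> {u \<in> three_cycles n. cay_adj (three_cycles n) u s \<and> cay_adj (three_cycles n) u t}"
    show "u \<in> K n (p,q)"
    proof (cases "u \<in> {s,t}")
      case True then show ?thesis using s t by blast
    next
      case False
      then have uS: "u \<in> three_cycles n" "cay_adj (three_cycles n) u s" "cay_adj (three_cycles n) u t"
        using u by auto
      obtain x where S1: "distinct [p, q, x]" "x \<in> {1..n}" "s = cyc3 p q x" "p \<in> {1..n}" "q \<in> {1..n}"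
        using S_nf[OF sS(1), of p] sS(2) pq' by auto
      obtain y where T1: "distinct [p, q, y]" "y \<in> {1..n}" "t = cyc3 p q y"
        using S_nf[OF tS(1), of p] tS(2) pq' by auto
      have xy: "x \<noteq> y" using S1 T1 st by metis
      have "u p = q"
        by (rule L_TRI[OF uS(1), of p q x y]) (use S1 T1 xy uS in auto)
      then show ?thesis using uS by (simp add: K_def)
    qed
  qed
qed

lemma K_inj:
  assumes n5: "5 \<le> n" and a: "\<alpha> \<in> Arcs n" and b: "\<beta> \<in> Arcs n" and eq: "K n \<alpha> = K n \<beta>"
  shows "\<alpha> = \<beta>"
proof -
  obtain p q where pq: "\<alpha> = (p,q)" "p \<in> {1..n}" "q \<in> {1..n}" "p \<noteq> q" using a by (auto simp: Arcs_def)
  obtain p' q' where pq': "\<beta> = (p',q')" "p' \<noteq> q'" using b by (auto simp: Arcs_def)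
  obtain x where x: "x \<in> {1..n}" "x \<notin> set [p,q]" using avoid_list[of "[p,q]" n] n5 by auto
  obtain y where y: "y \<in> {1..n}" "y \<notin> set [p,q,x]" using avoid_list[of "[p,q,x]" n] n5 by auto
  have "cyc3 p q x \<in> K n \<beta>" "cyc3 p q y \<in> K n \<beta>"
    using cyc3_in_K[of p q x n] cyc3_in_K[of p q y n] x y pq eq by auto
  then have e1: "cyc3 p q x p' = q'" and e2: "cyc3 p q y p' = q'" using pq' by (auto simp: K_def)
  have d1: "distinct [p,q,x]" and d2: "distinct [p,q,y]" and xy: "x \<noteq> y" using x y pq by auto
  have "p' = p \<and> q' = q"
    using e1 e2 d1 d2 xy pq'(2) unfolding cyc3_apply[OF d1] cyc3_apply[OF d2] by (auto split: if_splits)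
  then show ?thesis using pq pq' by simp
qed

lemma K_Pr:
  assumes a: "\<alpha> \<in> Arcs n" and b: "\<beta> \<in> Arcs n"
  shows "Pr \<alpha> \<beta> \<longleftrightarrow> K n \<alpha> \<inter> K n \<beta> \<noteq> {} \<and> \<alpha> \<noteq> \<beta>"
proof -
  obtain p q where pq: "\<alpha> = (p,q)" "p \<in> {1..n}" "q \<in> {1..n}" "p \<noteq> q" using a by (auto simp: Arcs_def)
  obtain c d where cd: "\<beta> = (c,d)" "c \<in> {1..n}" "d \<in> {1..n}" "c \<noteq> d" using b by (auto simp: Arcs_def)
  show ?thesis
  proof
    assume P: "Pr \<alpha> \<beta>"
    then have "(q = c \<and> d \<noteq> p) \<or> (d = p \<and> c \<noteq> q)" using pq cd by (simp add: Pr_def)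
    then show "K n \<alpha> \<inter> K n \<beta> \<noteq> {} \<and> \<alpha> \<noteq> \<beta>"
    proof
      assume h: "q = c \<and> d \<noteq> p"
      have "cyc3 p q d \<in> K n \<alpha> \<inter> K n \<beta>"
        using h pq cd by (auto simp: K_def cyc3_apply intro!: cyc3_S)
      then show ?thesis using h pq cd by auto
    next
      assume h: "d = p \<and> c \<noteq> q"
      have "cyc3 p q c \<in> K n \<alpha> \<inter> K n \<beta>"
        using h pq cd by (auto simp: K_def cyc3_apply intro!: cyc3_S)
      then show ?thesis using h pq cd by auto
    qed
  next
    assume h: "K n \<alpha> \<inter> K n \<beta> \<noteq> {} \<and> \<alpha> \<noteq> \<beta>"
    then obtain s where s: "s \<in> three_cycles n" "s p = q" "s c = d" using pq cd by (auto simp: K_def)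
    obtain x where S1: "distinct [p, q, x]" "s = cyc3 p q x"
      using S_nf[OF s(1), of p] s(2) pq(4) by auto
    have "c \<noteq> p" using h s pq cd by auto
    have "(q = c \<and> d \<noteq> p) \<or> (d = p \<and> c \<noteq> q)"
      using s(3) S1 cd(4) \<open>c \<noteq> p\<close> unfolding S1(2) cyc3_apply[OF S1(1)] by (auto split: if_splits)
    then show "Pr \<alpha> \<beta>" using pq cd by (simp add: Pr_def)
  qed
qed

lemma K_swap:
  assumes a: "\<alpha> \<in> Arcs n"
  shows "K n (prod.swap \<alpha>) = inv ` K n \<alpha>"
proof -
  obtain p q where pq: "\<alpha> = (p,q)" using prod.exhaust by blast
  have key: "s q = p \<longleftrightarrow> inv s p = q" if "s \<in> three_cycles n" for s
    using V_bij[OF S_sub_V[OF that]] by (metis bij_inv_eq_iff)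
  show ?thesis
  proof
    show "K n (prod.swap \<alpha>) \<subseteq> inv ` K n \<alpha>"
    proof
      fix s assume "s \<in> K n (prod.swap \<alpha>)"
      then have s: "s \<in> three_cycles n" "s q = p" using pq by (auto simp: K_def)
      have "inv s \<in> K n \<alpha>" using s key[OF s(1)] S_inv[OF s(1)] pq by (simp add: K_def)
      moreover have "s = inv (inv s)" using V_bij[OF S_sub_V[OF s(1)]] by (simp add: inv_inv_eq)
      ultimately show "s \<in> inv ` K n \<alpha>" by blast
    qed
    show "inv ` K n \<alpha> \<subseteq> K n (prod.swap \<alpha>)"
    proof
      fix t assume "t \<in> inv ` K n \<alpha>"
      then obtain s where s: "s \<in> three_cycles n" "s p = q" "t = inv s" using pq by (auto simp: K_def)
      have "inv s q = p" using V_bij[OF S_sub_V[OF s(1)]] s(2) by (metis bij_inv_eq_iff)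
      then show "t \<in> K n (prod.swap \<alpha>)" using s S_inv[OF s(1)] pq by (simp add: K_def)
    qed
  qed
qed


lemma S_eq_arcs:
  assumes u: "u \<in> three_cycles n" and d: "distinct [a,b,c]"
    and e: "u a = b" "u b = c" "u c = a"
  shows "u = cyc3 a b c"
proof -
  have sub: "{a,b,c} \<subseteq> {x. u x \<noteq> x}" using e d by auto
  have fin: "finite {x. u x \<noteq> x}" using S_supp_card[OF u] card.infinite by fastforce
  have "{a,b,c} = {x. u x \<noteq> x}"
    by (rule card_subset_eq[OF fin sub]) (use S_supp_card[OF u] d in simp)
  then have out: "u x = x" if "x \<notin> {a,b,c}" for x using that by blast
  show ?thesis
  proof
    fix x show "u x = cyc3 a b c x"
    proof (cases "x \<in> {a,b,c}")
      case True then show ?thesis using e d by (auto simp: cyc3_apply)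
    next
      case False then show ?thesis using out[OF False] d by (simp add: cyc3_apply)
    qed
  qed
qed

lemma conj_cyc3:
  assumes s: "\<sigma> permutes A" and d: "distinct [a,b,c]"
  shows "\<sigma> \<circ> cyc3 a b c \<circ> inv \<sigma> = cyc3 (\<sigma> a) (\<sigma> b) (\<sigma> c)"
  using conjugation_of_cycle[of "[a,b,c]" \<sigma>] d permutes_bij[OF s] by (simp add: cyc3_def)

locale locaut =
  fixes n :: nat and g :: "(nat \<Rightarrow> nat) \<Rightarrow> (nat \<Rightarrow> nat)"
  assumes n5: "5 \<le> n"
    and gS: "bij_betw g (three_cycles n) (three_cycles n)"
    and hom: "\<And>s t. s \<in> three_cycles n \<Longrightarrow> t \<in> three_cycles n \<Longrightarrow>
       cay_adj (three_cycles n) s t \<longleftrightarrow> cay_adj (three_cycles n) (g s) (g t)"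
begin

lemma g_in: "s \<in> three_cycles n \<Longrightarrow> g s \<in> three_cycles n"
  using gS by (rule bij_betw_apply)

lemma g_inj: "inj_on g (three_cycles n)" using gS by (simp add: bij_betw_def)

lemma g_img: "g ` three_cycles n = three_cycles n" using gS by (simp add: bij_betw_def)

lemma common_img:
  assumes s: "s \<in> three_cycles n" and t: "t \<in> three_cycles n"
  shows "g ` {u \<in> three_cycles n. cay_adj (three_cycles n) u s \<and> cay_adj (three_cycles n) u t}
       = {u \<in> three_cycles n. cay_adj (three_cycles n) u (g s) \<and> cay_adj (three_cycles n) u (g t)}"
proof
  show "g ` {u \<in> three_cycles n. cay_adj (three_cycles n) u s \<and> cay_adj (three_cycles n) u t}
       \<subseteq> {u \<in> three_cycles n. cay_adj (three_cycles n) u (g s) \<and> cay_adj (three_cycles n) u (g t)}"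
    using hom[OF _ s] hom[OF _ t] g_in by blast
  show "{u \<in> three_cycles n. cay_adj (three_cycles n) u (g s) \<and> cay_adj (three_cycles n) u (g t)}
       \<subseteq> g ` {u \<in> three_cycles n. cay_adj (three_cycles n) u s \<and> cay_adj (three_cycles n) u t}"
  proof
    fix w assume w: "w \<in> {u \<in> three_cycles n. cay_adj (three_cycles n) u (g s) \<and> cay_adj (three_cycles n) u (g t)}"
    then obtain u where u: "u \<in> three_cycles n" "w = g u" using g_img by blast
    then show "w \<in> g ` {u \<in> three_cycles n. cay_adj (three_cycles n) u s \<and> cay_adj (three_cycles n) u t}"
      using w hom[OF u(1) s] hom[OF u(1) t] by blast
  qed
qed

lemma g_inv: assumes s: "s \<in> three_cycles n" shows "g (inv s) = inv (g s)"
proof -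
  have si: "inv s \<in> three_cycles n" using S_inv[OF s] .
  have A: "cay_adj (three_cycles n) s (inv s) \<and>
      \<not> (\<exists>u\<in>three_cycles n. cay_adj (three_cycles n) u s \<and> cay_adj (three_cycles n) u (inv s))"
    using INV_char[OF n5 s si] by simp
  have "cay_adj (three_cycles n) (g s) (g (inv s))" using A hom[OF s si] by simp
  moreover have "\<not> (\<exists>w\<in>three_cycles n. cay_adj (three_cycles n) w (g s) \<and> cay_adj (three_cycles n) w (g (inv s)))"
    using A common_img[OF s si] by blast
  ultimately show ?thesis using INV_char[OF n5 g_in[OF s] g_in[OF si]] by simp
qed

lemma K_img:
  assumes a: "\<alpha> \<in> Arcs n"
  shows "\<exists>\<beta>\<in>Arcs n. g ` K n \<alpha> = K n \<beta>"
proof -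
  obtain p q where pq: "\<alpha> = (p,q)" "p \<in> {1..n}" "q \<in> {1..n}" "p \<noteq> q" using a by (auto simp: Arcs_def)
  obtain x where x: "x \<in> {1..n}" "x \<notin> set [p,q]" using avoid_list[of "[p,q]" n] n5 by auto
  obtain y where y: "y \<in> {1..n}" "y \<notin> set [p,q,x]" using avoid_list[of "[p,q,x]" n] n5 by auto
  obtain z where z: "z \<in> {1..n}" "z \<notin> set [p,q,x,y]" using avoid_list[of "[p,q,x,y]" n] n5 by auto
  define s where "s = cyc3 p q x"
  define t where "t = cyc3 p q y"
  define u where "u = cyc3 p q z"
  have sK: "s \<in> K n (p,q)" unfolding s_def by (rule cyc3_in_K) (use x pq in auto)
  have tK: "t \<in> K n (p,q)" unfolding t_def by (rule cyc3_in_K) (use y pq in auto)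
  have uK: "u \<in> K n (p,q)" unfolding u_def by (rule cyc3_in_K) (use z pq in auto)
  have sS: "s \<in> three_cycles n" "s p = q" using sK by (auto simp: K_def)
  have tS: "t \<in> three_cycles n" "t p = q" using tK by (auto simp: K_def)
  have uS: "u \<in> three_cycles n" "u p = q" using uK by (auto simp: K_def)
  have st: "s \<noteq> t" unfolding s_def t_def using cyc3_neq[of p q x y] x y pq by auto
  have us: "u \<noteq> s" unfolding s_def u_def using cyc3_neq[of p q x z] x z pq by auto
  have ut: "u \<noteq> t" unfolding t_def u_def using cyc3_neq[of p q y z] y z pq by auto
  have ast: "cay_adj (three_cycles n) s t" using L_CL[OF sS(1) tS(1) sS(2) tS(2) pq(4) st] .
  have aus: "cay_adj (three_cycles n) u s" using L_CL[OF uS(1) sS(1) uS(2) sS(2) pq(4) us] .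
  have aut: "cay_adj (three_cycles n) u t" using L_CL[OF uS(1) tS(1) uS(2) tS(2) pq(4) ut] .
  have gs: "g s \<in> three_cycles n" and gt: "g t \<in> three_cycles n" and gu: "g u \<in> three_cycles n"
    using g_in sS tS uS by auto
  have gast: "cay_adj (three_cycles n) (g s) (g t)" using ast hom[OF sS(1) tS(1)] by simp
  have gaus: "cay_adj (three_cycles n) (g u) (g s)" using aus hom[OF uS(1) sS(1)] by simp
  have gaut: "cay_adj (three_cycles n) (g u) (g t)" using aut hom[OF uS(1) tS(1)] by simp
  have nin: "g t \<noteq> inv (g s)"
  proof
    assume "g t = inv (g s)"
    then have "\<not> (\<exists>w\<in>three_cycles n. cay_adj (three_cycles n) w (g s) \<and> cay_adj (three_cycles n) w (g t))"
      using INV_char[OF n5 gs gt] by simp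
    then show False using gu gaus gaut by blast
  qed
  obtain i where i: "g s i \<noteq> i" "g t i = g s i" using L_AD[OF gs gt gast nin] by blast
  have iS: "i \<in> {1..n}" "g s i \<in> {1..n}" using S_nf[OF gs i(1)] by auto
  define \<beta> where "\<beta> = (i, g s i)"
  have b: "\<beta> \<in> Arcs n" using iS i by (simp add: \<beta>_def Arcs_def)
  have gsK: "g s \<in> K n \<beta>" and gtK: "g t \<in> K n \<beta>" using gs gt i by (auto simp: K_def \<beta>_def)
  have gst: "g s \<noteq> g t" using st g_inj sS tS by (metis inj_on_def)
  have "K n \<beta> = {g s, g t} \<union> {w \<in> three_cycles n. cay_adj (three_cycles n) w (g s) \<and> cay_adj (three_cycles n) w (g t)}"
    using K_KK[of i "g s i" n "g s" "g t"] b gsK gtK gst by (simp add: \<beta>_def)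
  moreover have "K n (p,q) = {s, t} \<union> {w \<in> three_cycles n. cay_adj (three_cycles n) w s \<and> cay_adj (three_cycles n) w t}"
    using K_KK[OF _ sK tK st] a pq by simp
  ultimately have "g ` K n \<alpha> = K n \<beta>" using common_img[OF sS(1) tS(1)] pq(1) by (simp add: image_Un)
  then show ?thesis using b by blast
qed

definition pi :: "nat \<times> nat \<Rightarrow> nat \<times> nat" where
  "pi \<alpha> = (SOME \<beta>. \<beta> \<in> Arcs n \<and> g ` K n \<alpha> = K n \<beta>)"

lemma pi: "\<alpha> \<in> Arcs n \<Longrightarrow> pi \<alpha> \<in> Arcs n \<and> g ` K n \<alpha> = K n (pi \<alpha>)"
  unfolding pi_def using K_img by (metis (mono_tags, lifting) someI_ex)

lemma gK_eq: "g ` K n \<alpha> = g ` K n \<beta> \<Longrightarrow> K n \<alpha> = K n \<beta>"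
  using inj_on_image_eq_iff[OF g_inj K_sub K_sub] by blast

lemma arcmap_pi: "arcmap n pi"
proof
  show "5 \<le> n" by (rule n5)
  show "pi \<alpha> \<in> Arcs n" if "\<alpha> \<in> Arcs n" for \<alpha> using pi[OF that] by blast
  show inj: "inj_on pi (Arcs n)"
  proof (rule inj_onI)
    fix \<alpha> \<beta> assume a: "\<alpha> \<in> Arcs n" "\<beta> \<in> Arcs n" "pi \<alpha> = pi \<beta>"
    then have "g ` K n \<alpha> = g ` K n \<beta>" using pi[OF a(1)] pi[OF a(2)] by simp
    then have "K n \<alpha> = K n \<beta>" by (rule gK_eq)
    then show "\<alpha> = \<beta>" using K_inj[OF n5 a(1,2)] by simp
  qed
  show "Pr \<alpha> \<beta> \<longleftrightarrow> Pr (pi \<alpha>) (pi \<beta>)" if a: "\<alpha> \<in> Arcs n" "\<beta> \<in> Arcs n" for \<alpha> \<beta>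
  proof -
    have pa: "pi \<alpha> \<in> Arcs n" "pi \<beta> \<in> Arcs n" using pi a by blast+
    have "g ` (K n \<alpha> \<inter> K n \<beta>) = g ` K n \<alpha> \<inter> g ` K n \<beta>"
      by (rule inj_on_image_Int[OF g_inj K_sub K_sub])
    then have e1: "K n \<alpha> \<inter> K n \<beta> \<noteq> {} \<longleftrightarrow> K n (pi \<alpha>) \<inter> K n (pi \<beta>) \<noteq> {}"
      using pi[OF a(1)] pi[OF a(2)] by auto
    have e2: "\<alpha> \<noteq> \<beta> \<longleftrightarrow> pi \<alpha> \<noteq> pi \<beta>" using inj a by (auto simp: inj_on_def)
    show ?thesis using K_Pr[OF a] K_Pr[OF pa] e1 e2 by simp
  qed
  show "pi (prod.swap \<alpha>) = prod.swap (pi \<alpha>)" if a: "\<alpha> \<in> Arcs n" for \<alpha>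
  proof -
    have sa: "prod.swap \<alpha> \<in> Arcs n" using swap_Arcs[OF a] .
    have pa: "pi \<alpha> \<in> Arcs n" using pi[OF a] by blast
    have psa: "pi (prod.swap \<alpha>) \<in> Arcs n" using pi[OF sa] by blast
    have "K n (pi (prod.swap \<alpha>)) = g ` K n (prod.swap \<alpha>)" using pi[OF sa] by simp
    also have "\<dots> = g ` inv ` K n \<alpha>" using K_swap[OF a] by simp
    also have "\<dots> = inv ` g ` K n \<alpha>"
    proof -
      have "g ` inv ` K n \<alpha> = (\<lambda>s. g (inv s)) ` K n \<alpha>" by (simp add: image_image)
      also have "\<dots> = (\<lambda>s. inv (g s)) ` K n \<alpha>"
      proof (rule image_cong[OF refl])
        fix s assume "s \<in> K n \<alpha>"
        then have "s \<in> three_cycles n" by (simp add: K_def)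
        then show "g (inv s) = inv (g s)" by (rule g_inv)
      qed
      also have "\<dots> = inv ` g ` K n \<alpha>" by (simp add: image_image)
      finally show ?thesis .
    qed
    also have "\<dots> = inv ` K n (pi \<alpha>)" using pi[OF a] by simp
    also have "\<dots> = K n (prod.swap (pi \<alpha>))" using K_swap[OF pa] by simp
    finally show ?thesis using K_inj[OF n5 psa swap_Arcs[OF pa]] by simp
  qed
qed

lemma g_arc:
  assumes s: "s \<in> three_cycles n" and a: "s a \<noteq> a"
  shows "g s (fst (pi (a, s a))) = snd (pi (a, s a))"
proof -
  have ar: "(a, s a) \<in> Arcs n" using S_nf[OF s a] by (auto simp: Arcs_def)
  have "s \<in> K n (a, s a)" using s by (simp add: K_def)
  then have "g s \<in> K n (pi (a, s a))" using pi[OF ar] by blast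
  then show ?thesis by (simp add: K_def)
qed

theorem main:
  "\<exists>\<sigma>. \<sigma> permutes {1..n} \<and> ((\<forall>s\<in>three_cycles n. g s = \<sigma> \<circ> s \<circ> inv \<sigma>) \<or>
                              (\<forall>s\<in>three_cycles n. g s = \<sigma> \<circ> inv s \<circ> inv \<sigma>))"
proof -
  obtain \<sigma> where \<sigma>: "\<sigma> permutes {1..n}"
    and cs: "(\<forall>a b. (a,b) \<in> Arcs n \<longrightarrow> pi (a,b) = (\<sigma> a, \<sigma> b)) \<or>
             (\<forall>a b. (a,b) \<in> Arcs n \<longrightarrow> pi (a,b) = (\<sigma> b, \<sigma> a))"
    using arcs_perm[OF arcmap_pi] by blast
  have injs: "\<And>x y. \<sigma> x = \<sigma> y \<Longrightarrow> x = y" using permutes_inj[OF \<sigma>] by (simp add: inj_eq)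
  have gen: "g s = cyc3 (\<sigma> a) (\<sigma> b) (\<sigma> c)" 
    if 1: "\<forall>a b. (a,b) \<in> Arcs n \<longrightarrow> pi (a,b) = (\<sigma> a, \<sigma> b)"
    and s: "s \<in> three_cycles n" "distinct [a,b,c]" "s = cyc3 a b c" for s a b c
  proof -
    have sa: "s a = b" "s b = c" "s c = a" using s by (auto simp: cyc3_apply)
    have ar: "(a,b) \<in> Arcs n" "(b,c) \<in> Arcs n" "(c,a) \<in> Arcs n"
      using S_nf[OF s(1), of a] S_nf[OF s(1), of b] S_nf[OF s(1), of c] sa s(2) by (auto simp: Arcs_def)
    have m: "s a \<noteq> a" "s b \<noteq> b" "s c \<noteq> c" using sa s(2) by auto
    have "g s (\<sigma> a) = \<sigma> b" using g_arc[OF s(1) m(1)] sa 1 ar by simp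
    moreover have "g s (\<sigma> b) = \<sigma> c" using g_arc[OF s(1) m(2)] sa 1 ar by simp
    moreover have "g s (\<sigma> c) = \<sigma> a" using g_arc[OF s(1) m(3)] sa 1 ar by simp
    moreover have "distinct [\<sigma> a, \<sigma> b, \<sigma> c]" using s(2) injs by auto
    ultimately show ?thesis using S_eq_arcs[OF g_in[OF s(1)]] by blast
  qed
  have gen2: "g s = cyc3 (\<sigma> a) (\<sigma> c) (\<sigma> b)" 
    if 2: "\<forall>a b. (a,b) \<in> Arcs n \<longrightarrow> pi (a,b) = (\<sigma> b, \<sigma> a)"
    and s: "s \<in> three_cycles n" "distinct [a,b,c]" "s = cyc3 a b c" for s a b c
  proof -
    have sa: "s a = b" "s b = c" "s c = a" using s by (auto simp: cyc3_apply)
    have ar: "(a,b) \<in> Arcs n" "(b,c) \<in> Arcs n" "(c,a) \<in> Arcs n"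
      using S_nf[OF s(1), of a] S_nf[OF s(1), of b] S_nf[OF s(1), of c] sa s(2) by (auto simp: Arcs_def)
    have m: "s a \<noteq> a" "s b \<noteq> b" "s c \<noteq> c" using sa s(2) by auto
    have "g s (\<sigma> b) = \<sigma> a" using g_arc[OF s(1) m(1)] sa 2 ar by simp
    moreover have "g s (\<sigma> c) = \<sigma> b" using g_arc[OF s(1) m(2)] sa 2 ar by simp
    moreover have "g s (\<sigma> a) = \<sigma> c" using g_arc[OF s(1) m(3)] sa 2 ar by simp
    moreover have "distinct [\<sigma> a, \<sigma> c, \<sigma> b]" using s(2) injs by auto
    ultimately show ?thesis using S_eq_arcs[OF g_in[OF s(1)]] by blast
  qed
  show ?thesis
  proof (rule exI[of _ \<sigma>], intro conjI \<sigma>)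
    show "(\<forall>s\<in>three_cycles n. g s = \<sigma> \<circ> s \<circ> inv \<sigma>) \<or> (\<forall>s\<in>three_cycles n. g s = \<sigma> \<circ> inv s \<circ> inv \<sigma>)"
      using cs
    proof
      assume 1: "\<forall>a b. (a,b) \<in> Arcs n \<longrightarrow> pi (a,b) = (\<sigma> a, \<sigma> b)"
      have "g s = \<sigma> \<circ> s \<circ> inv \<sigma>" if s: "s \<in> three_cycles n" for s
      proof -
        obtain a b c where abc: "distinct [a,b,c]" "s = cyc3 a b c" using s by (rule S_E) blast
        show ?thesis using gen[OF 1 s abc] conj_cyc3[OF \<sigma> abc(1)] abc(2) by simp
      qed
      then show ?thesis by blast
    next
      assume 2: "\<forall>a b. (a,b) \<in> Arcs n \<longrightarrow> pi (a,b) = (\<sigma> b, \<sigma> a)"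
      have "g s = \<sigma> \<circ> inv s \<circ> inv \<sigma>" if s: "s \<in> three_cycles n" for s
      proof -
        obtain a b c where abc: "distinct [a,b,c]" "s = cyc3 a b c" using s by (rule S_E) blast
        have d': "distinct [a,c,b]" using abc(1) by auto
        show ?thesis using gen2[OF 2 s abc] conj_cyc3[OF \<sigma> d'] abc inv_cyc3[OF abc(1)] by simp
      qed
      then show ?thesis by blast
    qed
  qed
qed

end


abbreviation "Aut n \<equiv> graph_auts (alt_group n) (cay_adj (three_cycles n))"

lemma AutD0:
  assumes "f \<in> Aut n"
  shows "bij_betw f (alt_group n) (alt_group n) \<and> (\<forall>x. x \<notin> alt_group n \<longrightarrow> f x = x) \<and>
    (\<forall>x\<in>alt_group n. \<forall>y\<in>alt_group n. cay_adj (three_cycles n) x y \<longleftrightarrow> cay_adj (three_cycles n) (f x) (f y))"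
  using assms unfolding graph_auts_def mem_Collect_eq .

lemma AutD1: "f \<in> Aut n \<Longrightarrow> bij_betw f (alt_group n) (alt_group n)"
  using AutD0 by blast

lemma AutD2: "f \<in> Aut n \<Longrightarrow> x \<notin> alt_group n \<Longrightarrow> f x = x"
proof -
  assume f: "f \<in> Aut n" and x: "x \<notin> alt_group n"
  have "\<forall>x. x \<notin> alt_group n \<longrightarrow> f x = x" using AutD0[OF f] by (rule conjunct2[THEN conjunct1])
  then show "f x = x" using x by blast
qed

lemma AutD3:
  assumes "f \<in> Aut n" "x \<in> alt_group n" "y \<in> alt_group n"
  shows  "cay_adj (three_cycles n) x y \<longleftrightarrow> cay_adj (three_cycles n) (f x) (f y)"
proof -
  have "\<forall>x\<in>alt_group n. \<forall>y\<in>alt_group n. cay_adj (three_cycles n) x y \<longleftrightarrow> cay_adj (three_cycles n) (f x) (f y)"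
    using AutD0[OF assms(1)] by (rule conjunct2[THEN conjunct2])
  then show ?thesis using assms(2,3) by blast
qed

lemmas AutD = AutD1 AutD2 AutD3

lemma Aut_in: "f \<in> Aut n \<Longrightarrow> x \<in> alt_group n \<Longrightarrow> f x \<in> alt_group n"
  by (rule bij_betw_apply[OF AutD(1)])

lemma Aut_comp:
  assumes f: "f \<in> Aut n" and h: "h \<in> Aut n"
  shows "f \<circ> h \<in> Aut n"
proof -
  have "bij_betw (f \<circ> h) (alt_group n) (alt_group n)" using AutD(1)[OF f] AutD(1)[OF h] by (rule bij_betw_trans[rotated])
  moreover have "\<forall>x. x \<notin> alt_group n \<longrightarrow> (f \<circ> h) x = x" using AutD(2)[OF f] AutD(2)[OF h] by simp
  moreover have "\<forall>x\<in>alt_group n. \<forall>y\<in>alt_group n. cay_adj (three_cycles n) x y \<longleftrightarrow>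
      cay_adj (three_cycles n) ((f \<circ> h) x) ((f \<circ> h) y)"
  proof (intro ballI)
    fix x y assume xy: "x \<in> alt_group n" "y \<in> alt_group n"
    have "cay_adj (three_cycles n) x y \<longleftrightarrow> cay_adj (three_cycles n) (h x) (h y)"
      by (rule AutD(3)[OF h xy])
    also have "\<dots> \<longleftrightarrow> cay_adj (three_cycles n) (f (h x)) (f (h y))"
      by (rule AutD(3)[OF f Aut_in[OF h xy(1)] Aut_in[OF h xy(2)]])
    finally show "cay_adj (three_cycles n) x y \<longleftrightarrow> cay_adj (three_cycles n) ((f \<circ> h) x) ((f \<circ> h) y)"
      by simp
  qed
  ultimately show ?thesis by (simp add: graph_auts_def)
qed

lemma Aut_by_ham:
  assumes into: "\<And>x. x \<in> alt_group n \<Longrightarrow> k x \<in> alt_group n"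
    and into': "\<And>x. x \<in> alt_group n \<Longrightarrow> k' x \<in> alt_group n"
    and inv1: "\<And>x. x \<in> alt_group n \<Longrightarrow> k' (k x) = x"
    and inv2: "\<And>x. x \<in> alt_group n \<Longrightarrow> k (k' x) = x"
    and hm: "\<And>x y. x \<in> alt_group n \<Longrightarrow> y \<in> alt_group n \<Longrightarrow> ham (k x) (k y) = ham x y"
  shows "(\<lambda>x. if x \<in> alt_group n then k x else x) \<in> Aut n"
proof -
  let ?F = "\<lambda>x. if x \<in> alt_group n then k x else x"
  have "bij_betw ?F (alt_group n) (alt_group n)"
    by (rule bij_betw_byWitness[where f'=k']) (use into into' inv1 inv2 in auto)
  moreover have "\<forall>x\<in>alt_group n. \<forall>y\<in>alt_group n. cay_adj (three_cycles n) x y \<longleftrightarrow>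
      cay_adj (three_cycles n) (?F x) (?F y)"
    using adj_iff into hm by simp
  ultimately show ?thesis by (simp add: graph_auts_def)
qed

lemma card_img_eq: "inj f \<Longrightarrow> card (f ` A) = card A"
  by (rule card_image) (auto intro: inj_on_subset)

lemma img_pre: "bij w \<Longrightarrow> w ` {i. P (w i)} = {j. P j}"
proof
  assume w: "bij w"
  show "{j. P j} \<subseteq> w ` {i. P (w i)}"
  proof
    fix j assume "j \<in> {j. P j}"
    moreover have "w (inv w j) = j" using w by (simp add: bij_is_surj surj_f_inv_f)
    ultimately show "j \<in> w ` {i. P (w i)}" by (metis (mono_tags, lifting) image_eqI mem_Collect_eq)
  qed
qed auto

lemma ham_right:
  assumes w: "bij w" shows "ham (x \<circ> w) (y \<circ> w) = ham x y"
proof -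
  have "ham (x \<circ> w) (y \<circ> w) = card (w ` {i. x (w i) \<noteq> y (w i)})"
    unfolding ham_def using w by (simp add: card_img_eq bij_is_inj)
  also have "w ` {i. x (w i) \<noteq> y (w i)} = {j. x j \<noteq> y j}" by (rule img_pre[OF w])
  finally show ?thesis by (simp add: ham_def)
qed

lemma ham_conj:
  assumes s: "bij \<sigma>" shows "ham (\<sigma> \<circ> x \<circ> inv \<sigma>) (\<sigma> \<circ> y \<circ> inv \<sigma>) = ham x y"
proof -
  have "{i. (\<sigma> \<circ> x \<circ> inv \<sigma>) i \<noteq> (\<sigma> \<circ> y \<circ> inv \<sigma>) i} = {i. (x \<circ> inv \<sigma>) i \<noteq> (y \<circ> inv \<sigma>) i}"
    using bij_is_inj[OF s] by (simp add: inj_eq)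
  then have "ham (\<sigma> \<circ> x \<circ> inv \<sigma>) (\<sigma> \<circ> y \<circ> inv \<sigma>) = ham (x \<circ> inv \<sigma>) (y \<circ> inv \<sigma>)"
    by (simp add: ham_def)
  also have "\<dots> = ham x y" by (rule ham_right[OF bij_imp_bij_inv[OF s]])
  finally show ?thesis .
qed

lemma ham_inv:
  assumes x: "bij x" and y: "bij y" shows "ham (inv x) (inv y) = ham x y"
proof -
  have "{i. inv x i \<noteq> inv y i} = x ` {j. inv x (x j) \<noteq> inv y (x j)}"
    by (rule img_pre[OF x, symmetric])
  also have "{j. inv x (x j) \<noteq> inv y (x j)} = {j. x j \<noteq> y j}"
  proof -
    have "inv x (x j) = j" for j using x by (simp add: bij_is_inj inv_f_f)
    moreover have "(j = inv y (x j)) \<longleftrightarrow> x j = y j" for j using y by (metis bij_inv_eq_iff)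
    ultimately show ?thesis by simp
  qed
  finally show ?thesis unfolding ham_def using x by (simp add: card_img_eq bij_is_inj)
qed

lemma Rt_Aut:
  assumes w: "w \<in> alt_group n"
  shows "(\<lambda>x. if x \<in> alt_group n then x \<circ> w else x) \<in> Aut n"
proof (rule Aut_by_ham[where k'="\<lambda>x. x \<circ> inv w"])
  have bw: "bij w" using V_bij[OF w] .
  show "x \<circ> w \<in> alt_group n" if "x \<in> alt_group n" for x using V_comp[OF that w] .
  show "x \<circ> inv w \<in> alt_group n" if "x \<in> alt_group n" for x using V_comp[OF that V_inv[OF w]] .
  show "x \<circ> w \<circ> inv w = x" for x using bw by (simp add: fun_eq_iff bij_is_surj surj_f_inv_f)
  show "x \<circ> inv w \<circ> w = x" for x using bw by (simp add: fun_eq_iff bij_is_inj inv_f_f)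
  show "ham (x \<circ> w) (y \<circ> w) = ham x y" for x y using ham_right[OF bw] .
qed

lemma conjV:
  assumes s: "\<sigma> permutes {1..n}" and x: "x \<in> alt_group n"
  shows "\<sigma> \<circ> x \<circ> inv \<sigma> \<in> alt_group n"
proof -
  have ps: "permutation \<sigma>" using s by (auto intro: permutes_imp_permutation)
  have pi: "permutation (inv \<sigma>)" using s by (auto intro: permutes_imp_permutation permutes_inv)
  have px: "permutation x" using V_perm[OF x] .
  have "(\<sigma> \<circ> x \<circ> inv \<sigma>) permutes {1..n}"
    using s V_permutes[OF x] by (intro permutes_compose permutes_inv)
  moreover have "evenperm (\<sigma> \<circ> x \<circ> inv \<sigma>)"
  proof -
    have "permutation (\<sigma> \<circ> x)" using ps px by (simp add: permutation_compose)
    then have "evenperm (\<sigma> \<circ> x \<circ> inv \<sigma>) = (evenperm (\<sigma> \<circ> x) = evenperm (inv \<sigma>))"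
      using pi by (simp add: evenperm_comp)
    also have "\<dots> = evenperm x" using evenperm_comp[OF ps px] evenperm_inv[OF ps] by auto
    finally show ?thesis using x by (simp add: alt_group_def)
  qed
  ultimately show ?thesis by (simp add: alt_group_def)
qed

lemma inv_conj:
  assumes s: "bij \<sigma>" and x: "bij x"
  shows "inv (\<sigma> \<circ> x \<circ> inv \<sigma>) = \<sigma> \<circ> inv x \<circ> inv \<sigma>"
proof (rule inv_unique_comp)
  have a: "\<And>z. inv \<sigma> (\<sigma> z) = z" using s by (simp add: bij_is_inj inv_f_f)
  have b: "\<And>z. \<sigma> (inv \<sigma> z) = z" using s by (simp add: bij_is_surj surj_f_inv_f)
  have c: "\<And>z. inv x (x z) = z" using x by (simp add: bij_is_inj inv_f_f)
  have d: "\<And>z. x (inv x z) = z" using x by (simp add: bij_is_surj surj_f_inv_f)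
  show "\<sigma> \<circ> x \<circ> inv \<sigma> \<circ> (\<sigma> \<circ> inv x \<circ> inv \<sigma>) = id" by (simp add: fun_eq_iff a b c d)
  show "\<sigma> \<circ> inv x \<circ> inv \<sigma> \<circ> (\<sigma> \<circ> x \<circ> inv \<sigma>) = id" by (simp add: fun_eq_iff a b c d)
qed

definition Cj :: "(nat \<Rightarrow> nat) \<Rightarrow> bool \<Rightarrow> (nat \<Rightarrow> nat) \<Rightarrow> (nat \<Rightarrow> nat)" where
  "Cj \<sigma> b x = (if b then \<sigma> \<circ> inv x \<circ> inv \<sigma> else \<sigma> \<circ> x \<circ> inv \<sigma>)"

lemma Cj_V: "\<sigma> permutes {1..n} \<Longrightarrow> x \<in> alt_group n \<Longrightarrow> Cj \<sigma> b x \<in> alt_group n"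
  unfolding Cj_def using conjV V_inv by auto

lemma Cj_inv:
  assumes s: "\<sigma> permutes {1..n}" and x: "x \<in> alt_group n"
  shows "Cj (inv \<sigma>) b (Cj \<sigma> b x) = x"
proof -
  have bs: "bij \<sigma>" using s by (rule permutes_bij)
  have bx: "bij x" using V_bij[OF x] .
  have ii: "inv (inv \<sigma>) = \<sigma>" using bs by (simp add: inv_inv_eq)
  have a: "\<And>z. inv \<sigma> (\<sigma> z) = z" using bs by (simp add: bij_is_inj inv_f_f)
  have b: "\<And>z. \<sigma> (inv \<sigma> z) = z" using bs by (simp add: bij_is_surj surj_f_inv_f)
  show ?thesis
  proof (cases b)
    case True
    have "inv (\<sigma> \<circ> inv x \<circ> inv \<sigma>) = \<sigma> \<circ> x \<circ> inv \<sigma>"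
      using inv_conj[OF bs bij_imp_bij_inv[OF bx]] bx by (simp add: inv_inv_eq)
    then show ?thesis using True unfolding Cj_def ii by (simp add: fun_eq_iff a b)
  next
    case False then show ?thesis unfolding Cj_def ii by (simp add: fun_eq_iff a b)
  qed
qed

lemma Cj_ham:
  assumes s: "\<sigma> permutes {1..n}" and x: "x \<in> alt_group n" and y: "y \<in> alt_group n"
  shows "ham (Cj \<sigma> b x) (Cj \<sigma> b y) = ham x y"
proof -
  have bs: "bij \<sigma>" using s by (rule permutes_bij)
  show ?thesis unfolding Cj_def
    using ham_conj[OF bs] ham_inv[OF V_bij[OF x] V_bij[OF y]] by simp
qed

lemma Cj_Aut:
  assumes s: "\<sigma> permutes {1..n}"
  shows "(\<lambda>x. if x \<in> alt_group n then Cj \<sigma> b x else x) \<in> Aut n"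
proof (rule Aut_by_ham[where k'="Cj (inv \<sigma>) b"])
  have si: "inv \<sigma> permutes {1..n}" using s by (rule permutes_inv)
  have ii: "inv (inv \<sigma>) = \<sigma>" using permutes_bij[OF s] by (simp add: inv_inv_eq)
  show "Cj \<sigma> b x \<in> alt_group n" if "x \<in> alt_group n" for x using Cj_V[OF s that] .
  show "Cj (inv \<sigma>) b x \<in> alt_group n" if "x \<in> alt_group n" for x using Cj_V[OF si that] .
  show "Cj (inv \<sigma>) b (Cj \<sigma> b x) = x" if "x \<in> alt_group n" for x using Cj_inv[OF s that] .
  show "Cj \<sigma> b (Cj (inv \<sigma>) b x) = x" if "x \<in> alt_group n" for x using Cj_inv[OF si that] ii by simp
  show "ham (Cj \<sigma> b x) (Cj \<sigma> b y) = ham x y" if "x \<in> alt_group n" "y \<in> alt_group n" for x y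
    using Cj_ham[OF s that] .
qed

lemma S_nbr: "y \<in> three_cycles n \<longleftrightarrow> y \<in> alt_group n \<and> cay_adj (three_cycles n) id y"
  using S_sub_V by (auto simp: cay_adj_def)

lemma stab_locaut:
  assumes n5: "5 \<le> n" and f: "f \<in> Aut n" and f1: "f id = id"
  shows "locaut n f"
proof
  show "5 \<le> n" by (rule n5)
  have bV: "bij_betw f (alt_group n) (alt_group n)" using AutD(1)[OF f] .
  have adjf: "\<And>x y. x \<in> alt_group n \<Longrightarrow> y \<in> alt_group n \<Longrightarrow>
        cay_adj (three_cycles n) x y \<longleftrightarrow> cay_adj (three_cycles n) (f x) (f y)" using AutD(3)[OF f] .
  have idV: "id \<in> alt_group n" by (rule id_V)
  have sub: "f ` three_cycles n \<subseteq> three_cycles n"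
  proof
    fix z assume "z \<in> f ` three_cycles n"
    then obtain y where y: "y \<in> three_cycles n" "z = f y" by blast
    then have "y \<in> alt_group n" "cay_adj (three_cycles n) id y" using S_nbr by blast+
    then have "cay_adj (three_cycles n) (f id) (f y)" using adjf[OF idV \<open>y \<in> alt_group n\<close>] by blast
    then have "cay_adj (three_cycles n) id z" using f1 y(2) by simp
    moreover have "z \<in> alt_group n" using Aut_in[OF f \<open>y \<in> alt_group n\<close>] y(2) by simp
    ultimately show "z \<in> three_cycles n" using S_nbr by blast
  qed
  have sup: "three_cycles n \<subseteq> f ` three_cycles n"
  proof
    fix z assume z: "z \<in> three_cycles n"
    then have zV: "z \<in> alt_group n" "cay_adj (three_cycles n) id z" using S_nbr by blast+
    then obtain y where y: "y \<in> alt_group n" "f y = z" using bV by (metis bij_betw_iff_bijections)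
    then have "cay_adj (three_cycles n) id y" using adjf[OF idV y(1)] f1 zV by metis
    then have "y \<in> three_cycles n" using y S_nbr by blast
    then show "z \<in> f ` three_cycles n" using y by blast
  qed
  have "inj_on f (three_cycles n)"
    using bV S_sub_V by (metis bij_betw_def inj_on_subset subsetI)
  then show "bij_betw f (three_cycles n) (three_cycles n)" using sub sup by (simp add: bij_betw_def)
  show "cay_adj (three_cycles n) s t \<longleftrightarrow> cay_adj (three_cycles n) (f s) (f t)"
    if "s \<in> three_cycles n" "t \<in> three_cycles n" for s t
    using adjf[OF S_sub_V[OF that(1)] S_sub_V[OF that(2)]] .
qed


lemma rot3:
  assumes d1: "distinct [a,b,c]" and d2: "distinct [a',b',c']" and eq: "cyc3 a b c = cyc3 a' b' c'"
  shows "(a'=a \<and> b'=b \<and> c'=c) \<or> (a'=b \<and> b'=c \<and> c'=a) \<or> (a'=c \<and> b'=a \<and> c'=b)"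
proof -
  have e: "cyc3 a b c a' = b'" "cyc3 a b c b' = c'" "cyc3 a b c c' = a'"
    using eq d2 by (simp_all add: cyc3_apply)
  show ?thesis using e d1 d2 unfolding cyc3_apply[OF d1] by (auto split: if_splits)
qed

lemma sigmaA:
  assumes s: "\<sigma> permutes A" and d: "distinct [p,r,u,u']"
    and e1: "\<sigma> \<circ> cyc3 p r u \<circ> inv \<sigma> = cyc3 p r u" and e2: "\<sigma> \<circ> cyc3 p r u' \<circ> inv \<sigma> = cyc3 p r u'"
  shows "\<sigma> p = p \<and> \<sigma> r = r \<and> \<sigma> u = u"
proof -
  have inj: "\<And>x y. \<sigma> x = \<sigma> y \<longleftrightarrow> x = y" using permutes_inj[OF s] by (simp add: inj_eq)
  have d1: "distinct [p,r,u]" "distinct [p,r,u']" using d by auto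
  have r1: "cyc3 (\<sigma> p) (\<sigma> r) (\<sigma> u) = cyc3 p r u" using e1 conj_cyc3[OF s d1(1)] by simp
  have r2: "cyc3 (\<sigma> p) (\<sigma> r) (\<sigma> u') = cyc3 p r u'" using e2 conj_cyc3[OF s d1(2)] by simp
  have dd: "distinct [\<sigma> p, \<sigma> r, \<sigma> u]" "distinct [\<sigma> p, \<sigma> r, \<sigma> u']" using d inj by auto
  have A1: "(\<sigma> p=p \<and> \<sigma> r=r \<and> \<sigma> u=u) \<or> (\<sigma> p=r \<and> \<sigma> r=u \<and> \<sigma> u=p) \<or> (\<sigma> p=u \<and> \<sigma> r=p \<and> \<sigma> u=r)"
    using rot3[OF d1(1) dd(1) r1[symmetric]] .
  have A2: "(\<sigma> p=p \<and> \<sigma> r=r \<and> \<sigma> u'=u') \<or> (\<sigma> p=r \<and> \<sigma> r=u' \<and> \<sigma> u'=p) \<or> (\<sigma> p=u' \<and> \<sigma> r=p \<and> \<sigma> u'=r)"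
    using rot3[OF d1(2) dd(2) r2[symmetric]] .
  show ?thesis using A1 A2 d by auto
qed

lemma sigmaB:
  assumes s: "\<sigma> permutes A" and d: "distinct [p,q,r,u,u']"
    and e1: "\<sigma> \<circ> inv (cyc3 p r u) \<circ> inv \<sigma> = cyc3 p r u"
    and e2: "\<sigma> \<circ> inv (cyc3 p r u') \<circ> inv \<sigma> = cyc3 p r u'"
    and e3: "\<sigma> \<circ> inv (cyc3 r q u) \<circ> inv \<sigma> = cyc3 r q u"
  shows False
proof -
  have inj: "\<And>x y. \<sigma> x = \<sigma> y \<longleftrightarrow> x = y" using permutes_inj[OF s] by (simp add: inj_eq)
  have d1: "distinct [p,r,u]" "distinct [p,r,u']" "distinct [r,q,u]" using d by auto
  have d1': "distinct [p,u,r]" "distinct [p,u',r]" "distinct [r,u,q]" using d by auto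
  have r1: "cyc3 (\<sigma> p) (\<sigma> u) (\<sigma> r) = cyc3 p r u" using e1 conj_cyc3[OF s d1'(1)] inv_cyc3[OF d1(1)] by simp
  have r2: "cyc3 (\<sigma> p) (\<sigma> u') (\<sigma> r) = cyc3 p r u'" using e2 conj_cyc3[OF s d1'(2)] inv_cyc3[OF d1(2)] by simp
  have r3: "cyc3 (\<sigma> r) (\<sigma> u) (\<sigma> q) = cyc3 r q u" using e3 conj_cyc3[OF s d1'(3)] inv_cyc3[OF d1(3)] by simp
  have dd: "distinct [\<sigma> p, \<sigma> u, \<sigma> r]" "distinct [\<sigma> p, \<sigma> u', \<sigma> r]" "distinct [\<sigma> r, \<sigma> u, \<sigma> q]"
    using d inj by auto
  have A1: "(\<sigma> p=p \<and> \<sigma> u=r \<and> \<sigma> r=u) \<or> (\<sigma> p=r \<and> \<sigma> u=u \<and> \<sigma> r=p) \<or> (\<sigma> p=u \<and> \<sigma> u=p \<and> \<sigma> r=r)"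
    using rot3[OF d1(1) dd(1) r1[symmetric]] .
  have A2: "(\<sigma> p=p \<and> \<sigma> u'=r \<and> \<sigma> r=u') \<or> (\<sigma> p=r \<and> \<sigma> u'=u' \<and> \<sigma> r=p) \<or> (\<sigma> p=u' \<and> \<sigma> u'=p \<and> \<sigma> r=r)"
    using rot3[OF d1(2) dd(2) r2[symmetric]] .
  have A3: "(\<sigma> r=r \<and> \<sigma> u=q \<and> \<sigma> q=u) \<or> (\<sigma> r=q \<and> \<sigma> u=u \<and> \<sigma> q=r) \<or> (\<sigma> r=u \<and> \<sigma> u=r \<and> \<sigma> q=q)"
    using rot3[OF d1(3) dd(3) r3[symmetric]] .
  show False using A1 A2 A3 d by auto
qed

lemma comp_t1: "distinct [p,q,r,u] \<Longrightarrow> cyc3 p r u \<circ> cyc3 p q r = cyc3 p q u"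
  by (auto simp: fun_eq_iff cyc3_apply)

lemma comp_t2: "distinct [p,q,r,u] \<Longrightarrow> cyc3 r q u \<circ> cyc3 p q r = cyc3 p u r"
  by (auto simp: fun_eq_iff cyc3_apply)

lemma sigma_id:
  assumes n5: "5 \<le> n" and s: "\<sigma> permutes {1..n}" and d: "distinct [p,q,r]"
    and rg: "p \<in> {1..n}" "q \<in> {1..n}" "r \<in> {1..n}"
    and H: "\<And>u. u \<in> {1..n} \<Longrightarrow> u \<notin> {p,q,r} \<Longrightarrow>
        \<sigma> \<circ> cyc3 p r u \<circ> inv \<sigma> = cyc3 p r u \<and> \<sigma> \<circ> cyc3 r q u \<circ> inv \<sigma> = cyc3 r q u"
  shows "\<sigma> = id"
proof -
  have fixw: "\<sigma> p = p \<and> \<sigma> r = r \<and> \<sigma> w = w" if w: "w \<in> {1..n}" "w \<notin> {p,q,r}" for w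
  proof -
    obtain w' where w': "w' \<in> {1..n}" "w' \<notin> set [p,q,r,w]" using avoid_list[of "[p,q,r,w]" n] n5 by auto
    show ?thesis by (rule sigmaA[OF s, of p r w w']) (use d w w' H in auto)
  qed
  obtain u0 where u0: "u0 \<in> {1..n}" "u0 \<notin> set [p,q,r]" using avoid_list[of "[p,q,r]" n] n5 by auto
  have pr: "\<sigma> p = p" "\<sigma> r = r" "\<sigma> u0 = u0" using fixw[of u0] u0 by auto
  have "\<sigma> q = q"
  proof -
    have d3: "distinct [r,q,u0]" using d u0 by auto
    have "cyc3 (\<sigma> r) (\<sigma> q) (\<sigma> u0) = cyc3 r q u0" using H[of u0] u0 conj_cyc3[OF s d3] by simp
    then have "cyc3 r (\<sigma> q) u0 r = cyc3 r q u0 r" using pr by simp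
    moreover have "distinct [r, \<sigma> q, u0]"
      using d3 pr permutes_inj[OF s] by (auto simp: inj_eq)
    ultimately show ?thesis using d3 by (simp add: cyc3_apply)
  qed
  have "\<sigma> x = x" for x
  proof (cases "x \<in> {1..n}")
    case True
    then show ?thesis using fixw[of x] pr \<open>\<sigma> q = q\<close> by (cases "x \<in> {p,q,r}") auto
  next
    case False then show ?thesis using s by (simp add: permutes_not_in)
  qed
  then show ?thesis by (simp add: fun_eq_iff)
qed


lemma Rt_decomp:
  assumes h: "h \<in> Aut n" and y: "y \<in> alt_group n"
  shows "(\<lambda>z. if z \<in> alt_group n then h (z \<circ> y) \<circ> inv y else z) \<in> Aut n"
proof -
  let ?R = "\<lambda>w. (\<lambda>x. if x \<in> alt_group n then x \<circ> w else x)"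
  have eq: "(\<lambda>z. if z \<in> alt_group n then h (z \<circ> y) \<circ> inv y else z) = ?R (inv y) \<circ> h \<circ> ?R y"
  proof
    fix z show "(if z \<in> alt_group n then h (z \<circ> y) \<circ> inv y else z) = (?R (inv y) \<circ> h \<circ> ?R y) z"
    proof (cases "z \<in> alt_group n")
      case True
      have "z \<circ> y \<in> alt_group n" using V_comp[OF True y] .
      moreover then have "h (z \<circ> y) \<in> alt_group n" by (rule Aut_in[OF h])
      ultimately show ?thesis using True by simp
    next
      case False then show ?thesis using AutD2[OF h False] by simp
    qed
  qed
  show ?thesis unfolding eq
    by (intro Aut_comp Rt_Aut h y V_inv)
qed

lemma rigid_step:
  assumes n5: "5 \<le> n" and h: "h \<in> Aut n" and x: "x \<in> alt_group n" and c: "c \<in> three_cycles n"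
    and Qs: "\<forall>s\<in>three_cycles n. h (s \<circ> x) = s \<circ> x"
  shows "h (c \<circ> x) = c \<circ> x \<and> (\<forall>s\<in>three_cycles n. h (s \<circ> (c \<circ> x)) = s \<circ> (c \<circ> x))"
proof -
  define y where "y = c \<circ> x"
  have yV: "y \<in> alt_group n" unfolding y_def using V_comp[OF S_sub_V[OF c] x] .
  have by_: "bij y" using V_bij[OF yV] .
  have yinv: "y \<circ> inv y = id" using by_ by (simp add: fun_eq_iff bij_is_surj surj_f_inv_f)
  have hy: "h y = y" using Qs c unfolding y_def by blast
  define h' where "h' = (\<lambda>z. if z \<in> alt_group n then h (z \<circ> y) \<circ> inv y else z)"
  have h'A: "h' \<in> Aut n" unfolding h'_def using Rt_decomp[OF h yV] .
  have h'1: "h' id = id" using hy yinv id_V by (simp add: h'_def)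
  have fixT: "h' t = t" if t: "t \<in> three_cycles n" "t \<circ> c \<in> three_cycles n" for t
  proof -
    have "h (t \<circ> y) = t \<circ> y" using Qs t(2) unfolding y_def by (simp add: o_assoc)
    then show ?thesis using S_sub_V[OF t(1)] yinv by (simp add: h'_def o_assoc[symmetric])
  qed
  obtain p q r where pqr: "distinct [p,q,r]" "p \<in> {1..n}" "q \<in> {1..n}" "r \<in> {1..n}" "c = cyc3 p q r"
    using c by (rule S_E)
  have T: "h' (cyc3 p r u) = cyc3 p r u \<and> h' (cyc3 r q u) = cyc3 r q u"
    if u: "u \<in> {1..n}" "u \<notin> {p,q,r}" for u
  proof -
    have d: "distinct [p,q,r,u]" using pqr u by auto
    have "cyc3 p r u \<in> three_cycles n" "cyc3 p r u \<circ> c \<in> three_cycles n"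
      using d pqr u comp_t1[OF d] by (auto intro!: cyc3_S)
    moreover have "cyc3 r q u \<in> three_cycles n" "cyc3 r q u \<circ> c \<in> three_cycles n"
      using d pqr u comp_t2[OF d] by (auto intro!: cyc3_S)
    ultimately show ?thesis using fixT by blast
  qed
  interpret L: locaut n h' by (rule stab_locaut[OF n5 h'A h'1])
  obtain \<sigma> where \<sigma>: "\<sigma> permutes {1..n}"
    and cs: "(\<forall>s\<in>three_cycles n. h' s = \<sigma> \<circ> s \<circ> inv \<sigma>) \<or> (\<forall>s\<in>three_cycles n. h' s = \<sigma> \<circ> inv s \<circ> inv \<sigma>)"
    using L.main by blast
  have all: "h' s = s" if s: "s \<in> three_cycles n" for s
    using cs
  proof
    assume 1: "\<forall>s\<in>three_cycles n. h' s = \<sigma> \<circ> s \<circ> inv \<sigma>"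
    have "\<sigma> = id"
    proof (rule sigma_id[OF n5 \<sigma> pqr(1-4)])
      fix u assume u: "u \<in> {1..n}" "u \<notin> {p,q,r}"
      have d: "distinct [p,q,r,u]" using pqr u by auto
      have "cyc3 p r u \<in> three_cycles n" "cyc3 r q u \<in> three_cycles n" using d pqr u by (auto intro!: cyc3_S)
      then show "\<sigma> \<circ> cyc3 p r u \<circ> inv \<sigma> = cyc3 p r u \<and> \<sigma> \<circ> cyc3 r q u \<circ> inv \<sigma> = cyc3 r q u"
        using 1 T[OF u] by metis
    qed
    then show ?thesis using 1 s by simp
  next
    assume 2: "\<forall>s\<in>three_cycles n. h' s = \<sigma> \<circ> inv s \<circ> inv \<sigma>"
    obtain u where u: "u \<in> {1..n}" "u \<notin> set [p,q,r]" using avoid_list[of "[p,q,r]" n] n5 by auto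
    obtain u' where u': "u' \<in> {1..n}" "u' \<notin> set [p,q,r,u]" using avoid_list[of "[p,q,r,u]" n] n5 by auto
    have d: "distinct [p,q,r,u,u']" using pqr u u' by auto
    have inS: "cyc3 p r u \<in> three_cycles n" "cyc3 p r u' \<in> three_cycles n" "cyc3 r q u \<in> three_cycles n"
      using d pqr u u' by (auto intro!: cyc3_S)
    have "\<sigma> \<circ> inv (cyc3 p r u) \<circ> inv \<sigma> = cyc3 p r u" using 2 inS(1) T[of u] u by auto
    moreover have "\<sigma> \<circ> inv (cyc3 p r u') \<circ> inv \<sigma> = cyc3 p r u'" using 2 inS(2) T[of u'] u' by auto
    moreover have "\<sigma> \<circ> inv (cyc3 r q u) \<circ> inv \<sigma> = cyc3 r q u" using 2 inS(3) T[of u] u by auto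
    ultimately have False using sigmaB[OF \<sigma> d] by blast
    then show ?thesis ..
  qed
  have "h (s \<circ> y) = s \<circ> y" if s: "s \<in> three_cycles n" for s
  proof -
    have "h (s \<circ> y) \<circ> inv y = s" using all[OF s] S_sub_V[OF s] by (simp add: h'_def)
    then have "h (s \<circ> y) \<circ> inv y \<circ> y = s \<circ> y" by simp
    moreover have "h (s \<circ> y) \<circ> inv y \<circ> y = h (s \<circ> y)"
      using by_ by (simp add: fun_eq_iff bij_is_inj inv_f_f)
    ultimately show ?thesis by simp
  qed
  then show ?thesis using hy unfolding y_def by blast
qed

lemma decomp:
  assumes x: "x \<in> alt_group n" and ne: "x \<noteq> id"
  shows "\<exists>c\<in>three_cycles n. \<exists>x'\<in>alt_group n. x = c \<circ> x' \<and> card {i. x' i \<noteq> i} < card {i. x i \<noteq> i}"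
proof -
  let ?D = "{i. x i \<noteq> i}"
  have xp: "x permutes {1..n}" using V_permutes[OF x] .
  have Dsub: "?D \<subseteq> {1..n}" using xp by (auto simp: permutes_def)
  have fin: "finite ?D" using Dsub finite_subset by blast
  have injx: "inj x" using permutes_inj[OF xp] .
  obtain i where i: "x i \<noteq> i" using ne by (auto simp: fun_eq_iff)
  define j where "j = x i"
  have ji: "j \<noteq> i" using i by (simp add: j_def)
  have jD: "x j \<noteq> j" using i injx unfolding j_def by (metis injD)
  have "\<exists>k. x k \<noteq> k \<and> k \<noteq> i \<and> k \<noteq> j"
  proof (rule ccontr)
    assume "\<not> ?thesis"
    then have sub: "\<And>k. x k \<noteq> k \<Longrightarrow> k = i \<or> k = j" by blast
    have xj: "x j = i"
    proof -
      have "x (x j) \<noteq> x j" using jD injx by (metis injD)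
      then have "x j = i \<or> x j = j" using sub by blast
      then show ?thesis using jD by blast
    qed
    have "x = transpose i j"
    proof
      fix m show "x m = transpose i j m"
        using sub[of m] xj ji by (cases "m = i"; cases "m = j") (auto simp: j_def)
    qed
    then have "\<not> evenperm x" using ji by (simp add: evenperm_swap)
    then show False using x by (simp add: alt_group_def)
  qed
  then obtain k where k: "x k \<noteq> k" "k \<noteq> i" "k \<noteq> j" by blast
  have rg: "i \<in> {1..n}" "j \<in> {1..n}" "k \<in> {1..n}" using Dsub i jD k by auto
  have dc: "distinct [j,i,k]" using ji k by auto
  define c' where "c' = cyc3 j i k"
  have c'S: "c' \<in> three_cycles n" unfolding c'_def using dc rg by (intro cyc3_S) auto
  define x' where "x' = c' \<circ> x"
  have x'V: "x' \<in> alt_group n" unfolding x'_def using V_comp[OF S_sub_V[OF c'S] x] .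
  have bc: "bij c'" using V_bij[OF S_sub_V[OF c'S]] .
  have xeq: "x = inv c' \<circ> x'" unfolding x'_def using bc by (simp add: fun_eq_iff bij_is_inj inv_f_f)
  have supp: "{m. x' m \<noteq> m} \<subseteq> ?D - {i}"
  proof
    fix m assume m: "m \<in> {m. x' m \<noteq> m}"
    have "m \<noteq> i" using m dc by (auto simp: x'_def c'_def cyc3_apply j_def)
    moreover have "x m \<noteq> m"
    proof
      assume xm: "x m = m"
      then have "m \<noteq> j" "m \<noteq> k" using jD k by auto
      then show False using m xm \<open>m \<noteq> i\<close> dc by (simp add: x'_def c'_def cyc3_apply)
    qed
    ultimately show "m \<in> ?D - {i}" by blast
  qed
  have "card {m. x' m \<noteq> m} \<le> card (?D - {i})" using supp fin by (intro card_mono) auto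
  also have "\<dots> < card ?D" using fin i by (intro card_Diff1_less) auto
  finally show ?thesis using xeq S_inv[OF c'S] x'V by blast
qed

lemma rigid:
  assumes n5: "5 \<le> n" and h: "h \<in> Aut n" and h1: "h id = id" and hs: "\<forall>s\<in>three_cycles n. h s = s"
  shows "\<forall>x\<in>alt_group n. h x = x"
proof -
  have "\<forall>x. x \<in> alt_group n \<longrightarrow> card {i. x i \<noteq> i} = m \<longrightarrow>
          h x = x \<and> (\<forall>s\<in>three_cycles n. h (s \<circ> x) = s \<circ> x)" for m
  proof (induction m rule: less_induct)
    case (less m)
    show ?case
    proof (intro allI impI)
      fix x assume x: "x \<in> alt_group n" and cm: "card {i. x i \<noteq> i} = m"
      show "h x = x \<and> (\<forall>s\<in>three_cycles n. h (s \<circ> x) = s \<circ> x)"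
      proof (cases "x = id")
        case True then show ?thesis using h1 hs by simp
      next
        case False
        obtain c x' where cx: "c \<in> three_cycles n" "x' \<in> alt_group n" "x = c \<circ> x'"
          "card {i. x' i \<noteq> i} < card {i. x i \<noteq> i}" using decomp[OF x False] by blast
        have "h x' = x' \<and> (\<forall>s\<in>three_cycles n. h (s \<circ> x') = s \<circ> x')"
          using less.IH[of "card {i. x' i \<noteq> i}"] cx cm by blast
        then show ?thesis using rigid_step[OF n5 h cx(2) cx(1)] cx(3) by simp
      qed
    qed
  qed
  then show ?thesis by blast
qed


definition Phi :: "nat \<Rightarrow> (nat \<Rightarrow> nat) \<times> (nat \<Rightarrow> nat) \<Rightarrow> (nat \<Rightarrow> nat) \<Rightarrow> (nat \<Rightarrow> nat)" where
  "Phi n st x = (if x \<in> alt_group n then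
      (if evenperm (fst st \<circ> snd st) then fst st \<circ> x \<circ> snd st
       else fst st \<circ> transpose 1 2 \<circ> inv x \<circ> snd st) else x)"

lemma evenperm_conj:
  fixes n :: nat
  assumes s: "\<sigma> permutes {1..n}" and t: "permutation t"
  shows "evenperm (\<sigma> \<circ> t \<circ> inv \<sigma>) = evenperm t"
proof -
  have finN: "finite {1..n}" by simp
  have ps: "permutation \<sigma>" by (rule permutes_imp_permutation[OF finN s])
  have pi: "permutation (inv \<sigma>)" by (rule permutes_imp_permutation[OF finN permutes_inv[OF s]])
  have "permutation (\<sigma> \<circ> t)" using ps t by (simp add: permutation_compose)
  then have "evenperm (\<sigma> \<circ> t \<circ> inv \<sigma>) = (evenperm (\<sigma> \<circ> t) = evenperm (inv \<sigma>))"
    using pi by (simp add: evenperm_comp)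
  also have "\<dots> = evenperm t" using evenperm_comp[OF ps t] evenperm_inv[OF ps] by auto
  finally show ?thesis .
qed

lemma Aut_sub:
  assumes n5: "5 \<le> n" and f: "f \<in> Aut n"
  shows "f \<in> Phi n ` ({\<sigma>. \<sigma> permutes {1..n}} \<times> {\<tau>. \<tau> permutes {1..n}})"
proof -
  have finN: "finite {1..n}" by simp
  define w where "w = f id"
  have wV: "w \<in> alt_group n" unfolding w_def by (rule Aut_in[OF f id_V])
  have bw: "bij w" using V_bij[OF wV] .
  define g where "g = (\<lambda>x. if x \<in> alt_group n then x \<circ> inv w else x) \<circ> f"
  have gA: "g \<in> Aut n" unfolding g_def by (intro Aut_comp Rt_Aut V_inv wV f)
  have gV: "g x = f x \<circ> inv w" if "x \<in> alt_group n" for x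
    using Aut_in[OF f that] by (simp add: g_def)
  have g1: "g id = id" using gV[OF id_V] bw by (simp add: w_def fun_eq_iff bij_is_surj surj_f_inv_f)
  interpret L: locaut n g by (rule stab_locaut[OF n5 gA g1])
  obtain \<sigma> b where \<sigma>: "\<sigma> permutes {1..n}" and gs: "\<forall>s\<in>three_cycles n. g s = Cj \<sigma> b s"
  proof -
    obtain \<sigma> where \<sigma>: "\<sigma> permutes {1..n}"
      and cs: "(\<forall>s\<in>three_cycles n. g s = \<sigma> \<circ> s \<circ> inv \<sigma>) \<or> (\<forall>s\<in>three_cycles n. g s = \<sigma> \<circ> inv s \<circ> inv \<sigma>)"
      using L.main by blast
    then show ?thesis using that[of \<sigma> False] that[of \<sigma> True] by (auto simp: Cj_def)
  qed
  have si: "inv \<sigma> permutes {1..n}" using \<sigma> by (rule permutes_inv)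
  have ii: "inv (inv \<sigma>) = \<sigma>" using permutes_bij[OF \<sigma>] by (simp add: inv_inv_eq)
  define k where "k = (\<lambda>x. if x \<in> alt_group n then Cj (inv \<sigma>) b x else x)"
  have kA: "k \<in> Aut n" unfolding k_def by (rule Cj_Aut[OF si])
  have hA: "k \<circ> g \<in> Aut n" by (rule Aut_comp[OF kA gA])
  have Cj_id: "Cj (inv \<sigma>) b id = id"
    using permutes_bij[OF \<sigma>] by (auto simp: Cj_def fun_eq_iff ii bij_is_surj surj_f_inv_f bij_is_inj inv_f_f)
  have h1: "(k \<circ> g) id = id" using g1 id_V Cj_id by (simp add: k_def)
  have hs: "\<forall>s\<in>three_cycles n. (k \<circ> g) s = s"
  proof
    fix s assume s: "s \<in> three_cycles n"
    have "g s \<in> alt_group n" using L.g_in[OF s] S_sub_V by blast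
    then show "(k \<circ> g) s = s" using gs s Cj_inv[OF \<sigma> S_sub_V[OF s]] by (simp add: k_def)
  qed
  have hx: "\<forall>x\<in>alt_group n. (k \<circ> g) x = x" by (rule rigid[OF n5 hA h1 hs])
  have gx: "g x = Cj \<sigma> b x" if x: "x \<in> alt_group n" for x
  proof -
    have gxV: "g x \<in> alt_group n" using Aut_in[OF gA x] .
    have "(k \<circ> g) x = x" using hx x by blast
    then have "Cj (inv \<sigma>) b (g x) = x" using gxV by (simp add: k_def)
    then have "Cj \<sigma> b (Cj (inv \<sigma>) b (g x)) = Cj \<sigma> b x" by simp
    moreover have "Cj \<sigma> b (Cj (inv \<sigma>) b (g x)) = g x" using Cj_inv[OF si gxV] ii by simp
    ultimately show ?thesis by simp
  qed
  have fx: "f x = Cj \<sigma> b x \<circ> w" if x: "x \<in> alt_group n" for x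
  proof -
    have "f x \<circ> inv w = Cj \<sigma> b x" using gV[OF x] gx[OF x] by simp
    then have "f x \<circ> inv w \<circ> w = Cj \<sigma> b x \<circ> w" by simp
    moreover have "f x \<circ> inv w \<circ> w = f x" using bw by (simp add: fun_eq_iff bij_is_inj inv_f_f)
    ultimately show ?thesis by simp
  qed
  have fo: "f x = x" if "x \<notin> alt_group n" for x using AutD2[OF f that] .
  define \<tau> where "\<tau> = inv \<sigma> \<circ> w"
  have \<tau>p: "\<tau> permutes {1..n}" unfolding \<tau>_def using si V_permutes[OF wV] by (rule permutes_compose[rotated])
  have st: "\<sigma> \<circ> \<tau> = w" unfolding \<tau>_def using permutes_bij[OF \<sigma>]
    by (simp add: fun_eq_iff bij_is_surj surj_f_inv_f)
  have ew: "evenperm w" using wV by (simp add: alt_group_def)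
  have r12: "(1::nat) \<in> {1..n}" "(2::nat) \<in> {1..n}" using n5 by auto
  show ?thesis
  proof (cases b)
    case False
    have "f = Phi n (\<sigma>, \<tau>)"
    proof
      fix x show "f x = Phi n (\<sigma>, \<tau>) x"
        using fx[of x] fo[of x] st ew False by (simp add: Phi_def Cj_def \<tau>_def o_assoc)
    qed
    then show ?thesis using \<sigma> \<tau>p by blast
  next
    case True
    define \<sigma>' where "\<sigma>' = \<sigma> \<circ> transpose 1 2"
    have \<sigma>'p: "\<sigma>' permutes {1..n}" unfolding \<sigma>'_def
      using permutes_swap_id[OF r12] \<sigma> by (rule permutes_compose)
    have tt: "transpose (1::nat) 2 \<circ> transpose 1 2 = id" by (simp add: fun_eq_iff)
    have odd: "\<not> evenperm (\<sigma>' \<circ> \<tau>)"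
    proof -
      have "\<sigma>' \<circ> \<tau> = (\<sigma> \<circ> transpose 1 2 \<circ> inv \<sigma>) \<circ> w" by (simp add: \<sigma>'_def \<tau>_def o_assoc)
      moreover have "evenperm (\<sigma> \<circ> transpose 1 2 \<circ> inv \<sigma>) = False"
        using evenperm_conj[OF \<sigma> permutation_swap_id] by (simp add: evenperm_swap)
      moreover have "permutation (\<sigma> \<circ> transpose 1 2 \<circ> inv \<sigma>)"
        using permutes_imp_permutation[OF finN \<sigma>] permutes_imp_permutation[OF finN permutes_inv[OF \<sigma>]]
        by (simp add: permutation_compose permutation_swap_id)
      moreover have "permutation w" using V_perm[OF wV] .
      ultimately show ?thesis using ew by (simp add: evenperm_comp)
    qed
    have "f = Phi n (\<sigma>', \<tau>)"
    proof
      fix x show "f x = Phi n (\<sigma>', \<tau>) x"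
      proof (cases "x \<in> alt_group n")
        case xin: True
        have "\<sigma>' \<circ> transpose 1 2 \<circ> inv x \<circ> \<tau> = Cj \<sigma> True x \<circ> w"
          by (simp add: \<sigma>'_def \<tau>_def Cj_def fun_eq_iff transpose_def)
        then show ?thesis using fx[OF xin] odd True xin by (simp add: Phi_def)
      next
        case False then show ?thesis using fo[OF False] by (simp add: Phi_def)
      qed
    qed
    then show ?thesis using \<sigma>'p \<tau>p by blast
  qed
qed

theorem corollary3p1:
  fixes n :: nat
  assumes "n \<ge> 5"
  shows "card (graph_auts (alt_group n) (cay_adj (three_cycles n))) \<le> (fact n)^2"
proof -
  let ?P = "{\<sigma>. \<sigma> permutes {1..n}}"
  have finP: "finite ?P" by (rule finite_permutations) simp
  have cP: "card ?P = fact n" by (rule card_permutations) simp_all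
  have "card (Aut n) \<le> card (Phi n ` (?P \<times> ?P))"
    by (rule card_mono) (use finP Aut_sub[OF assms] in auto)
  also have "\<dots> \<le> card (?P \<times> ?P)" by (rule card_image_le) (use finP in simp)
  also have "\<dots> = (fact n)^2" using cP by (simp add: card_cartesian_product power2_eq_square)
  finally show ?thesis .
qed


end
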